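(* Let $\mathbf{L}\in\{\mathbf{K}_D,\mathbf{KD}_D\}$. Let $\Gamma,\Delta$ be finite multisets of formulas, $p$ a propositional variable and $a$ an agent symbol. Then there exists a formula $A$ such that: (i) $\mathsf{V}(A)\subseteq\mathsf{V}(\Gamma\cup\Delta)\setminus\{p\}$ and $\mathsf{Agt}(A)\subseteq\mathsf{Agt}(\Gamma\cup\Delta)\setminus\{a\}$; (ii) $\mathsf{G}(\mathbf{L})\vdash\Gamma,A\Rightarrow\Delta$; (iii) for all finite multisets $\Pi,\Lambda$ of formulas with $p\notin\mathsf{V}(\Pi\cup\Lambda)$ and $a\notin\mathsf{Agt}(\Pi\cup\Lambda)$: if $\mathsf{G}(\mathbf{L})\vdash\Pi,\Gamma\Rightarrow\Delta,\Lambda$, then $\mathsf{G}(\mathbf{L})\vdash\Pi\Rightarrow A,\Lambda$.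
   Context: Language: fix a finite nonempty set $\mathsf{Agt}$ of agent symbols and a countable set $\mathsf{Prop}$ of propositional variables; $\mathsf{Grp}$ is the set of nonempty subsets of $\mathsf{Agt}$. Formulas: $\alpha::=p\mid\bot\mid\alpha\wedge\alpha\mid\alpha\vee\alpha\mid\alpha\rightarrow\alpha\mid\neg\alpha\mid D_G\alpha$ with $p\in\mathsf{Prop}$, $G\in\mathsf{Grp}$. $\mathsf{V}(\cdot)$ is the set of propositional variables occurring, $\mathsf{Agt}(\cdot)$ the set of agent symbols occurring (the union of all $G$ with $D_G$ occurring); for multisets these are unions. An outmost-boxed formula is one of the form $D_G\gamma$. Sequent calculi: a sequent $\Gamma\Rightarrow\Delta$ is a pair of finite multisets of formulas; $\mathsf{G}(\mathbf{L})\vdash S$ means $S$ is the root of a finite tree built from initial sequents by the rules. $\mathsf{G}(\mathbf{K}_D)$ has initial sequents $\Gamma,p\Rightarrow p,\Delta$ ($p\in\mathsf{Prop}$) and $\bot,\Gamma\Rightarrow\Delta$; the propositional rules: $(R\wedge)$ from $\Gamma\Rightarrow\Delta,\alpha_1$ and $\Gamma\Rightarrow\Delta,\alpha_2$ infer $\Gamma\Rightarrow\Delta,\alpha_1\wedge\alpha_2$; $(L\wedge)$ from $\alpha_1,\alpha_2,\Gamma\Rightarrow\Delta$ infer $\alpha_1\wedge\alpha_2,\Gamma\Rightarrow\Delta$; $(R\vee)$ from $\Gamma\Rightarrow\Delta,\alpha_1,\alpha_2$ infer $\Gamma\Rightarrow\Delta,\alpha_1\vee\alpha_2$; $(L\vee)$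 from $\alpha_1,\Gamma\Rightarrow\Delta$ and $\alpha_2,\Gamma\Rightarrow\Delta$ infer $\alpha_1\vee\alpha_2,\Gamma\Rightarrow\Delta$; $(R\rightarrow)$ from $\alpha_1,\Gamma\Rightarrow\Delta,\alpha_2$ infer $\Gamma\Rightarrow\Delta,\alpha_1\rightarrow\alpha_2$; $(L\rightarrow)$ from $\Gamma\Rightarrow\Delta,\alpha_1$ and $\alpha_2,\Gamma\Rightarrow\Delta$ infer $\alpha_1\rightarrow\alpha_2,\Gamma\Rightarrow\Delta$; $(R\neg)$ from $\alpha,\Gamma\Rightarrow\Delta$ infer $\Gamma\Rightarrow\Delta,\neg\alpha$; $(L\neg)$ from $\Gamma\Rightarrow\Delta,\alpha$ infer $\neg\alpha,\Gamma\Rightarrow\Delta$; and $(D_K)$: from $\alpha_1,\dots,\alpha_n\Rightarrow\beta$ ($n\ge0$) infer $\Sigma,D_{G_1}\alpha_1,\dots,D_{G_n}\alpha_n\Rightarrow D_G\beta,\Omega$, provided $G_i\subseteq G$ for all $i$, $\Sigma$ consists only of propositional variables, $\bot$, and formulas $D_H\gamma$ with $H\not\subseteq G$, and $\Omega$ consists only of propositional variables, $\bot$ and outmost-boxed formulas. $\mathsf{G}(\mathbf{KD}_D)$ adds $(D_D)$: from $\Gamma\Rightarrow$ (empty succedent) with $\Gamma$ nonempty infer $\Sigma,D_{\{a\}}\Gamma\Rightarrow\Omega$ ($a\in\mathsf{Agt}$, $D_{\{a\}}\Gamma=\{D_{\{a\}}\gamma:\gamma\in\Gamma\}$), provided $\Sigma$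 consists only of propositional variables, $\bot$, and formulas $D_H\gamma$ with $H\neq\{a\}$, and $\Omega$ only of propositional variables, $\bot$ and outmost-boxed formulas. *)

theory Defs
  imports Main "HOL-Library.Multiset" "HOL-Library.Countable"
begin

(* Formulas over propositional variables 'p (countable) and agent symbols 'a (a finite type,
   so Agt = UNIV :: 'a set is finite and nonempty). D G phi is the distributed-knowledge modality. *)
datatype ('p, 'a) fm =
    Var 'p
  | Bot
  | Conj "('p, 'a) fm" "('p, 'a) fm"
  | Disj "('p, 'a) fm" "('p, 'a) fm"
  | Imp "('p, 'a) fm" "('p, 'a) fm"
  | Neg "('p, 'a) fm"
  | D "'a set" "('p, 'a) fm"

fun wf :: "('p, 'a) fm \<Rightarrow> bool" where
  "wf (Var p) = True"
| "wf Bot = True"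
| "wf (Conj x y) = (wf x \<and> wf y)"
| "wf (Disj x y) = (wf x \<and> wf y)"
| "wf (Imp x y) = (wf x \<and> wf y)"
| "wf (Neg x) = wf x"
| "wf (D G x) = (G \<noteq> {} \<and> wf x)"

fun vars :: "('p, 'a) fm \<Rightarrow> 'p set" where
  "vars (Var p) = {p}"
| "vars Bot = {}"
| "vars (Conj x y) = vars x \<union> vars y"
| "vars (Disj x y) = vars x \<union> vars y"
| "vars (Imp x y) = vars x \<union> vars y"
| "vars (Neg x) = vars x"
| "vars (D G x) = vars x"

fun agts :: "('p, 'a) fm \<Rightarrow> 'a set" where
  "agts (Var p) = {}"
| "agts Bot = {}"
| "agts (Conj x y) = agts x \<union> agts y"
| "agts (Disj x y) = agts x \<union> agts y"
| "agts (Imp x y) = agts x \<union> agts y"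
| "agts (Neg x) = agts x"
| "agts (D G x) = G \<union> agts x"

definition varsM :: "('p, 'a) fm multiset \<Rightarrow> 'p set" where
  "varsM M = (\<Union>x\<in>set_mset M. vars x)"

definition agtsM :: "('p, 'a) fm multiset \<Rightarrow> 'a set" where
  "agtsM M = (\<Union>x\<in>set_mset M. agts x)"

fun boxed :: "('p, 'a) fm \<Rightarrow> bool" where
  "boxed (D G x) = True"
| "boxed _ = False"

definition omega_ok :: "('p, 'a) fm \<Rightarrow> bool" where
  "omega_ok x \<longleftrightarrow> (\<exists>q. x = Var q) \<or> x = Bot \<or> boxed x"

definition sigmaK_ok :: "'a set \<Rightarrow> ('p, 'a) fm \<Rightarrow> bool" where
  "sigmaK_ok G x \<longleftrightarrow> (\<exists>q. x = Var q) \<or> x = Bot \<or> (\<exists>H y. x = D H y \<and> \<not> H \<subseteq> G)"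

definition sigmaD_ok :: "'a \<Rightarrow> ('p, 'a) fm \<Rightarrow> bool" where
  "sigmaD_ok a x \<longleftrightarrow> (\<exists>q. x = Var q) \<or> x = Bot \<or> (\<exists>H y. x = D H y \<and> H \<noteq> {a})"

datatype logic = K_D | KD_D

inductive derivable :: "logic \<Rightarrow> ('p, 'a) fm multiset \<Rightarrow> ('p, 'a) fm multiset \<Rightarrow> bool"
  for L :: logic where
  init: "derivable L (add_mset (Var p) \<Gamma>) (add_mset (Var p) \<Delta>)"
| botL: "derivable L (add_mset Bot \<Gamma>) \<Delta>"
| conjR: "derivable L \<Gamma> (add_mset a1 \<Delta>) \<Longrightarrow> derivable L \<Gamma> (add_mset a2 \<Delta>)
          \<Longrightarrow> derivable L \<Gamma> (add_mset (Conj a1 a2) \<Delta>)"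
| conjL: "derivable L (add_mset a1 (add_mset a2 \<Gamma>)) \<Delta>
          \<Longrightarrow> derivable L (add_mset (Conj a1 a2) \<Gamma>) \<Delta>"
| disjR: "derivable L \<Gamma> (add_mset a1 (add_mset a2 \<Delta>))
          \<Longrightarrow> derivable L \<Gamma> (add_mset (Disj a1 a2) \<Delta>)"
| disjL: "derivable L (add_mset a1 \<Gamma>) \<Delta> \<Longrightarrow> derivable L (add_mset a2 \<Gamma>) \<Delta>
          \<Longrightarrow> derivable L (add_mset (Disj a1 a2) \<Gamma>) \<Delta>"
| impR: "derivable L (add_mset a1 \<Gamma>) (add_mset a2 \<Delta>)
          \<Longrightarrow> derivable L \<Gamma> (add_mset (Imp a1 a2) \<Delta>)"
| impL: "derivable L \<Gamma> (add_mset a1 \<Delta>) \<Longrightarrow> derivable L (add_mset a2 \<Gamma>) \<Delta>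
          \<Longrightarrow> derivable L (add_mset (Imp a1 a2) \<Gamma>) \<Delta>"
| negR: "derivable L (add_mset a \<Gamma>) \<Delta> \<Longrightarrow> derivable L \<Gamma> (add_mset (Neg a) \<Delta>)"
| negL: "derivable L \<Gamma> (add_mset a \<Delta>) \<Longrightarrow> derivable L (add_mset (Neg a) \<Gamma>) \<Delta>"
| DK: "derivable L (mset (map snd xs)) {#\<beta>#}
       \<Longrightarrow> (\<forall>(Gi, _) \<in> set xs. Gi \<subseteq> G)
       \<Longrightarrow> (\<forall>x \<in># \<Sigma>. sigmaK_ok G x)
       \<Longrightarrow> (\<forall>x \<in># \<Omega>. omega_ok x)
       \<Longrightarrow> derivable L (\<Sigma> + mset (map (\<lambda>(Gi, ai). D Gi ai) xs)) (add_mset (D G \<beta>) \<Omega>)"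
| DD: "L = KD_D \<Longrightarrow> derivable L \<Gamma>' {#} \<Longrightarrow> \<Gamma>' \<noteq> {#}
       \<Longrightarrow> (\<forall>x \<in># \<Sigma>. sigmaD_ok a x)
       \<Longrightarrow> (\<forall>x \<in># \<Omega>. omega_ok x)
       \<Longrightarrow> derivable L (\<Sigma> + image_mset (D {a}) \<Gamma>') \<Omega>"

end

theory Submission
  imports Defs
begin

abbreviation Dp :: "'a set \<times> ('p,'a) fm \<Rightarrow> ('p,'a) fm" where
  "Dp \<equiv> (\<lambda>(Gi, ai). D Gi ai)"

lemma DK':
  assumes "derivable L (image_mset snd M) {#\<beta>#}" "\<forall>(Gi, _) \<in># M. Gi \<subseteq> G"
    "\<forall>x \<in># \<Sigma>. sigmaK_ok G x" "\<forall>x \<in># \<Omega>. omega_ok x"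
    "S = \<Sigma> + image_mset Dp M" "T = add_mset (D G \<beta>) \<Omega>"
  shows "derivable L S T"
proof -
  obtain xs where xs0: "mset xs = M" using ex_mset[of M] by blast
  then have xs: "M = mset xs" by simp
  have "derivable L (\<Sigma> + mset (map Dp xs)) (add_mset (D G \<beta>) \<Omega>)"
    apply (rule derivable.DK)
    using assms xs by auto
  then show ?thesis using assms xs by simp
qed

lemma DD':
  assumes "L = KD_D" "derivable L \<Gamma>' {#}" "\<Gamma>' \<noteq> {#}" "\<forall>x \<in># \<Sigma>. sigmaD_ok b x"
    "\<forall>x \<in># \<Omega>. omega_ok x" "S = \<Sigma> + image_mset (D {b}) \<Gamma>'"
  shows "derivable L S \<Omega>"
  using derivable.DD[OF assms(1-5)] assms(6) by simp

lemma wR_atom: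
  "derivable L \<Gamma> \<Delta> \<Longrightarrow> omega_ok x \<Longrightarrow> derivable L \<Gamma> (add_mset x \<Delta>)"
proof (induction rule: derivable.induct)
  case (init p \<Gamma> \<Delta>)
  then show ?case using derivable.init[of L p \<Gamma> "add_mset x \<Delta>"] by (simp add: add_mset_commute)
next
  case (botL \<Gamma> \<Delta>)
  then show ?case by (simp add: derivable.botL)
next
  case (conjR \<Gamma> a1 \<Delta> a2)
  then show ?case using derivable.conjR[of L \<Gamma> a1 "add_mset x \<Delta>" a2] by (simp add: add_mset_commute)
next
  case (conjL a1 a2 \<Gamma> \<Delta>)
  then show ?case by (simp add: derivable.conjL)
next
  case (disjR \<Gamma> a1 a2 \<Delta>)
  then show ?case using derivable.disjR[of L \<Gamma> a1 a2 "add_mset x \<Delta>"] by (simp add: add_mset_commute)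
next
  case (disjL a1 \<Gamma> \<Delta> a2)
  then show ?case by (simp add: derivable.disjL)
next
  case (impR a1 \<Gamma> a2 \<Delta>)
  then show ?case using derivable.impR[of L a1 \<Gamma> a2 "add_mset x \<Delta>"] by (simp add: add_mset_commute)
next
  case (impL \<Gamma> a1 \<Delta> a2)
  then show ?case using derivable.impL[of L \<Gamma> a1 "add_mset x \<Delta>" a2] by (simp add: add_mset_commute)
next
  case (negR a \<Gamma> \<Delta>)
  then show ?case using derivable.negR[of L a \<Gamma> "add_mset x \<Delta>"] by (simp add: add_mset_commute)
next
  case (negL \<Gamma> a \<Delta>)
  then show ?case using derivable.negL[of L \<Gamma> a "add_mset x \<Delta>"] by (simp add: add_mset_commute)
next
  case (DK xs \<beta> G \<Sigma> \<Omega>)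
  show ?case
    apply (rule DK'[where M="mset xs" and \<Sigma>=\<Sigma> and \<Omega>="add_mset x \<Omega>" and G=G and \<beta>=\<beta>])
    using DK by (auto simp: add_mset_commute)
next
  case (DD \<Gamma>' \<Sigma> b \<Omega>)
  show ?case
    apply (rule derivable.DD)
    using DD by auto
qed

lemma wL_atom:
  "derivable L \<Gamma> \<Delta> \<Longrightarrow> omega_ok x
   \<Longrightarrow> (\<forall>H y \<Gamma> \<Delta>. x = D H y \<longrightarrow> derivable L \<Gamma> \<Delta> \<longrightarrow> derivable L (add_mset y \<Gamma>) \<Delta>)
   \<Longrightarrow> derivable L (add_mset x \<Gamma>) \<Delta>"
proof (induction rule: derivable.induct)
  case (init p \<Gamma> \<Delta>)
  then show ?case using derivable.init[of L p "add_mset x \<Gamma>" \<Delta>] by (simp add: add_mset_commute)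
next
  case (botL \<Gamma> \<Delta>)
  then show ?case using derivable.botL[of L "add_mset x \<Gamma>" \<Delta>] by (simp add: add_mset_commute)
next
  case (conjR \<Gamma> a1 \<Delta> a2)
  then show ?case using derivable.conjR[of L "add_mset x \<Gamma>" a1 \<Delta> a2] by (simp add: add_mset_commute)
next
  case (conjL a1 a2 \<Gamma> \<Delta>)
  then show ?case using derivable.conjL[of L a1 a2 "add_mset x \<Gamma>" \<Delta>] by (simp add: add_mset_commute)
next
  case (disjR \<Gamma> a1 a2 \<Delta>)
  then show ?case using derivable.disjR[of L "add_mset x \<Gamma>" a1 a2 \<Delta>] by (simp add: add_mset_commute)
next
  case (disjL a1 \<Gamma> \<Delta> a2)
  then show ?case using derivable.disjL[of L a1 "add_mset x \<Gamma>" \<Delta> a2] by (simp add: add_mset_commute)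
next
  case (impR a1 \<Gamma> a2 \<Delta>)
  then show ?case using derivable.impR[of L a1 "add_mset x \<Gamma>" a2 \<Delta>] by (simp add: add_mset_commute)
next
  case (impL \<Gamma> a1 \<Delta> a2)
  then show ?case using derivable.impL[of L "add_mset x \<Gamma>" a1 \<Delta> a2] by (simp add: add_mset_commute)
next
  case (negR a \<Gamma> \<Delta>)
  then show ?case using derivable.negR[of L a "add_mset x \<Gamma>" \<Delta>] by (simp add: add_mset_commute)
next
  case (negL \<Gamma> a \<Delta>)
  then show ?case using derivable.negL[of L "add_mset x \<Gamma>" a \<Delta>] by (simp add: add_mset_commute)
next
  case (DK xs \<beta> G \<Sigma> \<Omega>)
  show ?case
  proof (cases "\<exists>H y. x = D H y \<and> H \<subseteq> G")
    case True
    then obtain H y where x: "x = D H y" "H \<subseteq> G" by blast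
    have d: "derivable L (add_mset y (mset (map snd xs))) {#\<beta>#}"
      using DK.prems(2) DK.hyps(1) x(1) by blast
    show ?thesis
      apply (rule DK'[where M="add_mset (H,y) (mset xs)" and \<Sigma>=\<Sigma> and \<Omega>=\<Omega> and G=G and \<beta>=\<beta>])
      using d DK.hyps x by auto
  next
    case False
    have sx: "sigmaK_ok G x" using False DK.prems(1) unfolding omega_ok_def sigmaK_ok_def
      by (cases x) auto
    show ?thesis
      apply (rule DK'[where M="mset xs" and \<Sigma>="add_mset x \<Sigma>" and \<Omega>=\<Omega> and G=G and \<beta>=\<beta>])
      using sx DK.hyps by auto
  qed
next
  case (DD \<Gamma>' \<Sigma> b \<Omega>)
  show ?case
  proof (cases "\<exists>y. x = D {b} y")
    case True
    then obtain y where x: "x = D {b} y" by blast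
    have d: "derivable L (add_mset y \<Gamma>') {#}" using DD.prems(2) DD.hyps(2) x by blast
    show ?thesis
      apply (rule DD'[where \<Gamma>'="add_mset y \<Gamma>'" and \<Sigma>=\<Sigma> and b=b])
      using d DD.hyps x by auto
  next
    case False
    have sx: "sigmaD_ok b x" using False DD.prems(1) unfolding omega_ok_def sigmaD_ok_def
      by (cases x) auto
    show ?thesis
      apply (rule DD'[where \<Gamma>'="\<Gamma>'" and \<Sigma>="add_mset x \<Sigma>" and b=b])
      using sx DD.hyps by auto
  qed
qed

lemma weak1:
  fixes x :: "('p,'a) fm"
  shows "(\<forall>\<Gamma> \<Delta>. derivable L \<Gamma> \<Delta> \<longrightarrow> derivable L (add_mset x \<Gamma>) \<Delta>) \<and>
   (\<forall>\<Gamma> \<Delta>. derivable L \<Gamma> \<Delta> \<longrightarrow> derivable L \<Gamma> (add_mset x \<Delta>))"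
proof (induction x)
  case (Var q)
  have o: "omega_ok (Var q)" by (simp add: omega_ok_def)
  have h: "\<forall>H' y' \<Gamma> \<Delta>. Var q = D H' y' \<longrightarrow> derivable L \<Gamma> \<Delta> \<longrightarrow> derivable L (add_mset y' \<Gamma>) \<Delta>"
    by simp
  show ?case
  proof (intro conjI allI impI)
    fix \<Gamma> \<Delta> :: "('p,'a) fm multiset" assume "derivable L \<Gamma> \<Delta>"
    then show "derivable L (add_mset (Var q) \<Gamma>) \<Delta>" by (rule wL_atom[OF _ o h])
  next
    fix \<Gamma> \<Delta> :: "('p,'a) fm multiset" assume "derivable L \<Gamma> \<Delta>"
    then show "derivable L \<Gamma> (add_mset (Var q) \<Delta>)" by (rule wR_atom[OF _ o])
  qed
next
  case Bot
  have o: "omega_ok (Bot)" by (simp add: omega_ok_def)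
  have h: "\<forall>H' y' \<Gamma> \<Delta>. Bot = D H' y' \<longrightarrow> derivable L \<Gamma> \<Delta> \<longrightarrow> derivable L (add_mset y' \<Gamma>) \<Delta>"
    by simp
  show ?case
  proof (intro conjI allI impI)
    fix \<Gamma> \<Delta> :: "('p,'a) fm multiset" assume "derivable L \<Gamma> \<Delta>"
    then show "derivable L (add_mset (Bot) \<Gamma>) \<Delta>" by (rule wL_atom[OF _ o h])
  next
    fix \<Gamma> \<Delta> :: "('p,'a) fm multiset" assume "derivable L \<Gamma> \<Delta>"
    then show "derivable L \<Gamma> (add_mset (Bot) \<Delta>)" by (rule wR_atom[OF _ o])
  qed
next
  case (D H y)
  have o: "omega_ok (D H y)" by (simp add: omega_ok_def)
  have h: "\<forall>H' y' \<Gamma> \<Delta>. D H y = D H' y' \<longrightarrow> derivable L \<Gamma> \<Delta> \<longrightarrow> derivable L (add_mset y' \<Gamma>) \<Delta>"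
    using D by simp
  show ?case
  proof (intro conjI allI impI)
    fix \<Gamma> \<Delta> :: "('p,'a) fm multiset" assume "derivable L \<Gamma> \<Delta>"
    then show "derivable L (add_mset (D H y) \<Gamma>) \<Delta>" by (rule wL_atom[OF _ o h])
  next
    fix \<Gamma> \<Delta> :: "('p,'a) fm multiset" assume "derivable L \<Gamma> \<Delta>"
    then show "derivable L \<Gamma> (add_mset (D H y) \<Delta>)" by (rule wR_atom[OF _ o])
  qed
next
  case (Conj y z)
  show ?case
  proof (intro conjI allI impI)
    fix \<Gamma> \<Delta> :: "('p,'a) fm multiset" assume d: "derivable L \<Gamma> \<Delta>"
    have h1: "derivable L (add_mset y (add_mset z \<Gamma>)) \<Delta>" using Conj.IH d by blast
    
    show "derivable L (add_mset (Conj y z) \<Gamma>) \<Delta>" by (rule derivable.conjL[OF h1])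
  next
    fix \<Gamma> \<Delta> :: "('p,'a) fm multiset" assume d: "derivable L \<Gamma> \<Delta>"
    have h1: "derivable L \<Gamma> (add_mset y \<Delta>)" using Conj.IH d by blast
    have h2: "derivable L \<Gamma> (add_mset z \<Delta>)" using Conj.IH d by blast
    show "derivable L \<Gamma> (add_mset (Conj y z) \<Delta>)" by (rule derivable.conjR[OF h1 h2])
  qed
next
  case (Disj y z)
  show ?case
  proof (intro conjI allI impI)
    fix \<Gamma> \<Delta> :: "('p,'a) fm multiset" assume d: "derivable L \<Gamma> \<Delta>"
    have h1: "derivable L (add_mset y \<Gamma>) \<Delta>" using Disj.IH d by blast
    have h2: "derivable L (add_mset z \<Gamma>) \<Delta>" using Disj.IH d by blast
    show "derivable L (add_mset (Disj y z) \<Gamma>) \<Delta>" by (rule derivable.disjL[OF h1 h2])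
  next
    fix \<Gamma> \<Delta> :: "('p,'a) fm multiset" assume d: "derivable L \<Gamma> \<Delta>"
    have h1: "derivable L \<Gamma> (add_mset y (add_mset z \<Delta>))" using Disj.IH d by blast
    
    show "derivable L \<Gamma> (add_mset (Disj y z) \<Delta>)" by (rule derivable.disjR[OF h1])
  qed
next
  case (Imp y z)
  show ?case
  proof (intro conjI allI impI)
    fix \<Gamma> \<Delta> :: "('p,'a) fm multiset" assume d: "derivable L \<Gamma> \<Delta>"
    have h1: "derivable L \<Gamma> (add_mset y \<Delta>)" using Imp.IH d by blast
    have h2: "derivable L (add_mset z \<Gamma>) \<Delta>" using Imp.IH d by blast
    show "derivable L (add_mset (Imp y z) \<Gamma>) \<Delta>" by (rule derivable.impL[OF h1 h2])
  next
    fix \<Gamma> \<Delta> :: "('p,'a) fm multiset" assume d: "derivable L \<Gamma> \<Delta>"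
    have h1: "derivable L (add_mset y \<Gamma>) (add_mset z \<Delta>)" using Imp.IH d by blast
    
    show "derivable L \<Gamma> (add_mset (Imp y z) \<Delta>)" by (rule derivable.impR[OF h1])
  qed
next
  case (Neg y)
  show ?case
  proof (intro conjI allI impI)
    fix \<Gamma> \<Delta> :: "('p,'a) fm multiset" assume d: "derivable L \<Gamma> \<Delta>"
    have h1: "derivable L \<Gamma> (add_mset y \<Delta>)" using Neg.IH d by blast
    show "derivable L (add_mset (Neg y) \<Gamma>) \<Delta>" by (rule derivable.negL[OF h1])
  next
    fix \<Gamma> \<Delta> :: "('p,'a) fm multiset" assume d: "derivable L \<Gamma> \<Delta>"
    have h1: "derivable L (add_mset y \<Gamma>) \<Delta>" using Neg.IH d by blast
    show "derivable L \<Gamma> (add_mset (Neg y) \<Delta>)" by (rule derivable.negR[OF h1])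
  qed
qed

lemma wL: "derivable L \<Gamma> \<Delta> \<Longrightarrow> derivable L (add_mset x \<Gamma>) \<Delta>"
  using weak1 by blast
lemma wR: "derivable L \<Gamma> \<Delta> \<Longrightarrow> derivable L \<Gamma> (add_mset x \<Delta>)"
  using weak1 by blast

lemma weakR: "derivable L \<Gamma> \<Delta> \<Longrightarrow> derivable L \<Gamma> (\<Delta> + \<Delta>')"
proof (induction \<Delta>')
  case empty then show ?case by simp
next
  case (add x \<Delta>') then show ?case using wR[of L \<Gamma> "\<Delta> + \<Delta>'" x] by simp
qed

lemma weak: "derivable L \<Gamma> \<Delta> \<Longrightarrow> derivable L (\<Gamma> + \<Gamma>') (\<Delta> + \<Delta>')"
proof (induction \<Gamma>')
  case empty then show ?case using weakR by simp
next
  case (add x \<Gamma>') then show ?case using wL[of L "\<Gamma> + \<Gamma>'" "\<Delta> + \<Delta>'" x] by simp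
qed

lemma split_add:
  assumes "add_mset x S = \<Pi> + \<Gamma>"
  shows "(\<exists>\<Pi>0. \<Pi> = add_mset x \<Pi>0 \<and> S = \<Pi>0 + \<Gamma>) \<or> (\<exists>\<Gamma>0. \<Gamma> = add_mset x \<Gamma>0 \<and> S = \<Pi> + \<Gamma>0)"
proof (cases "x \<in># \<Pi>")
  case True
  then have "\<Pi> = add_mset x (\<Pi> - {#x#})" by simp
  then have "add_mset x S = add_mset x ((\<Pi> - {#x#}) + \<Gamma>)" using assms by (metis union_mset_add_mset_left)
  then have "S = (\<Pi> - {#x#}) + \<Gamma>" by simp
  then show ?thesis using \<open>\<Pi> = add_mset x (\<Pi> - {#x#})\<close> by blast
next
  case False
  then have "x \<in># \<Gamma>" using assms by (metis union_iff union_single_eq_member)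
  then have "\<Gamma> = add_mset x (\<Gamma> - {#x#})" by simp
  then have "add_mset x S = add_mset x (\<Pi> + (\<Gamma> - {#x#}))" using assms by (metis union_mset_add_mset_right)
  then have "S = \<Pi> + (\<Gamma> - {#x#})" by simp
  then show ?thesis using \<open>\<Gamma> = add_mset x (\<Gamma> - {#x#})\<close> by blast
qed

lemma split_plus:
  assumes "A + B = C + (E :: 'x multiset)"
  shows "\<exists>A1 A2 B1 B2. A = A1 + A2 \<and> B = B1 + B2 \<and> C = A1 + B1 \<and> E = A2 + B2"
proof -
  define A1 where "A1 = A \<inter># C"
  define A2 where "A2 = A - A1"
  define B1 where "B1 = C - A1"
  define B2 where "B2 = B - B1"
  have c: "\<And>y. count A y + count B y = count C y + count E y"
    using assms by (metis count_union)
  have 1: "A = A1 + A2" unfolding multiset_eq_iff A1_def A2_def by (simp add: min_def)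
  have 2: "C = A1 + B1" unfolding multiset_eq_iff A1_def B1_def by (simp add: min_def)
  have 3: "B = B1 + B2" unfolding multiset_eq_iff
  proof
    fix y show "count B y = count (B1 + B2) y" using c[of y] by (simp add: B1_def B2_def A1_def min_def)
  qed
  have 4: "E = A2 + B2" unfolding multiset_eq_iff
  proof
    fix y show "count E y = count (A2 + B2) y" using c[of y] by (simp add: A2_def B1_def B2_def A1_def min_def)
  qed
  have "A = A1 + A2 \<and> B = B1 + B2 \<and> C = A1 + B1 \<and> E = A2 + B2" using 1 2 3 4 by blast
  then show ?thesis by blast
qed

lemma varsM_simps[simp]:
  "varsM {#} = {}" "varsM (add_mset x M) = vars x \<union> varsM M" "varsM (M + N) = varsM M \<union> varsM N"
  by (auto simp: varsM_def)

lemma agtsM_simps[simp]: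
  "agtsM {#} = {}" "agtsM (add_mset x M) = agts x \<union> agtsM M" "agtsM (M + N) = agtsM M \<union> agtsM N"
  by (auto simp: agtsM_def)

lemma varsM_mono: "N \<subseteq># M \<Longrightarrow> varsM N \<subseteq> varsM M"
  unfolding varsM_def by (meson SUP_subset_mono set_mset_mono subset_refl)
lemma agtsM_mono: "N \<subseteq># M \<Longrightarrow> agtsM N \<subseteq> agtsM M"
  unfolding agtsM_def by (meson SUP_subset_mono set_mset_mono subset_refl)

definition msize :: "('p,'a) fm multiset \<Rightarrow> nat" where
  "msize M = sum_mset (image_mset size M)"

lemma msize_simps[simp]:
  "msize {#} = 0" "msize (add_mset x M) = size x + msize M" "msize (M + N) = msize M + msize N"
  by (auto simp: msize_def)

lemma msize_mono: "N \<subseteq># M \<Longrightarrow> msize N \<le> msize M"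
  by (metis le_add1 msize_simps(3) subset_mset.add_diff_inverse)

fun unbox :: "('p,'a) fm \<Rightarrow> ('p,'a) fm" where
  "unbox (D G x) = x"
| "unbox _ = Bot"

fun boxgrp :: "('p,'a) fm \<Rightarrow> 'a set" where
  "boxgrp (D G x) = G"
| "boxgrp _ = {}"

lemma boxed_eq: "boxed x \<Longrightarrow> x = D (boxgrp x) (unbox x)"
  by (cases x) auto

lemma unbox_msize: "\<forall>x\<in>#N. boxed x \<Longrightarrow> msize (image_mset unbox N) + size N = msize N"
proof (induction N)
  case empty then show ?case by simp
next
  case (add x N)
  then show ?case by (cases x) auto
qed

lemma unbox_Dp: "image_mset unbox (image_mset Dp M) = image_mset snd M"
  by (induction M) auto

lemma Dp_unbox: "\<forall>x\<in>#N. boxed x \<Longrightarrow> image_mset Dp (image_mset (\<lambda>x. (boxgrp x, unbox x)) N) = N"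
proof (induction N)
  case empty then show ?case by simp
next
  case (add x N)
  then show ?case by (cases x) auto
qed

lemma unbox_vars: "\<forall>x\<in>#N. boxed x \<Longrightarrow> varsM (image_mset unbox N) = varsM N"
proof (induction N)
  case empty then show ?case by simp
next
  case (add x N)
  then show ?case by (cases x) auto
qed

lemma unbox_agts: "\<forall>x\<in>#N. boxed x \<Longrightarrow> agtsM (image_mset unbox N) \<subseteq> agtsM N"
proof (induction N)
  case empty then show ?case by simp
next
  case (add x N)
  then show ?case by (cases x) auto
qed

lemma unbox_wf: "\<forall>x\<in>#N. boxed x \<and> wf x \<Longrightarrow> \<forall>x\<in>#image_mset unbox N. wf x"
  by (auto elim!: boxed.elims)

lemma finite_submsets: "finite {N. N \<subseteq># (M :: 'x multiset)}"
proof -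
  have "{N. N \<subseteq># M} \<subseteq> mset ` {xs. set xs \<subseteq> set_mset M \<and> length xs \<le> size M}"
  proof
    fix N assume "N \<in> {N. N \<subseteq># M}"
    then have N: "N \<subseteq># M" by simp
    obtain xs where xs: "mset xs = N" using ex_mset[of N] by blast
    have "set xs \<subseteq> set_mset M" using N xs by (metis mset_subset_eqD set_mset_mset subsetI)
    moreover have "length xs \<le> size M" using N xs by (metis size_mset size_mset_mono)
    ultimately show "N \<in> mset ` {xs. set xs \<subseteq> set_mset M \<and> length xs \<le> size M}" using xs by blast
  qed
  moreover have "finite (mset ` {xs. set xs \<subseteq> set_mset M \<and> length xs \<le> size M})"
    by (intro finite_imageI finite_lists_length_le) simp
  ultimately show ?thesis by (rule finite_subset)
qed

definition disjs :: "('p,'a) fm list \<Rightarrow> ('p,'a) fm" where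
  "disjs xs = foldr Disj xs Bot"

lemma disjs_props:
  "wf (disjs xs) = (\<forall>x\<in>set xs. wf x)"
  "vars (disjs xs) = (\<Union>x\<in>set xs. vars x)"
  "agts (disjs xs) = (\<Union>x\<in>set xs. agts x)"
  by (induction xs) (auto simp: disjs_def)

lemma disjs_L: "\<forall>x\<in>set xs. derivable L (add_mset x \<Gamma>) \<Delta> \<Longrightarrow> derivable L (add_mset (disjs xs) \<Gamma>) \<Delta>"
proof (induction xs)
  case Nil then show ?case by (simp add: disjs_def derivable.botL)
next
  case (Cons x xs)
  then show ?case unfolding disjs_def by (simp add: derivable.disjL)
qed

lemma disjs_R: "x \<in> set xs \<Longrightarrow> derivable L \<Pi> (add_mset x \<Lambda>) \<Longrightarrow> derivable L \<Pi> (add_mset (disjs xs) \<Lambda>)"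
proof (induction xs arbitrary: \<Lambda>)
  case Nil then show ?case by simp
next
  case (Cons y xs)
  show ?case
  proof (cases "x = y")
    case True
    have "derivable L \<Pi> (add_mset x (add_mset (disjs xs) \<Lambda>))"
      using wR[OF Cons.prems(2), of "disjs xs"] by (simp add: add_mset_commute)
    then show ?thesis using True unfolding disjs_def by (simp add: derivable.disjR)
  next
    case False
    then have "derivable L \<Pi> (add_mset (disjs xs) \<Lambda>)" using Cons by simp
    then have "derivable L \<Pi> (add_mset y (add_mset (disjs xs) \<Lambda>))"
      using wR[of L \<Pi> "add_mset (disjs xs) \<Lambda>" y] by simp
    then show ?thesis unfolding disjs_def by (simp add: derivable.disjR)
  qed
qed

definition UI :: "logic \<Rightarrow> 'p \<Rightarrow> 'a \<Rightarrow> ('p,'a) fm multiset \<Rightarrow> ('p,'a) fm multiset \<Rightarrow> ('p,'a) fm \<Rightarrow> bool" where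
  "UI L p a \<Gamma> \<Delta> A \<longleftrightarrow> wf A
    \<and> vars A \<subseteq> varsM (\<Gamma> + \<Delta>) - {p}
    \<and> agts A \<subseteq> agtsM (\<Gamma> + \<Delta>) - {a}
    \<and> derivable L (add_mset A \<Gamma>) \<Delta>
    \<and> (\<forall>\<Pi> \<Lambda>. (\<forall>x \<in># \<Pi> + \<Lambda>. wf x)
          \<longrightarrow> p \<notin> varsM (\<Pi> + \<Lambda>) \<longrightarrow> a \<notin> agtsM (\<Pi> + \<Lambda>)
          \<longrightarrow> derivable L (\<Pi> + \<Gamma>) (\<Delta> + \<Lambda>)
          \<longrightarrow> derivable L \<Pi> (add_mset A \<Lambda>))"

definition condf :: "'p \<Rightarrow> 'a \<Rightarrow> ('p,'a) fm \<Rightarrow> bool" where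
  "condf p a x \<longleftrightarrow> wf x \<and> p \<notin> vars x \<and> a \<notin> agts x"

lemma cond_iff: "((\<forall>x \<in># M. wf x) \<and> p \<notin> varsM M \<and> a \<notin> agtsM M) \<longleftrightarrow> (\<forall>x\<in>#M. condf p a x)"
  by (auto simp: condf_def varsM_def agtsM_def)

lemma condf_simps[simp]:
  "condf p a (Var q) = (q \<noteq> p)" "condf p a Bot = True"
  "condf p a (Conj y z) = (condf p a y \<and> condf p a z)"
  "condf p a (Disj y z) = (condf p a y \<and> condf p a z)"
  "condf p a (Imp y z) = (condf p a y \<and> condf p a z)"
  "condf p a (Neg y) = condf p a y"
  "condf p a (D G y) = (G \<noteq> {} \<and> a \<notin> G \<and> condf p a y)"
  by (auto simp: condf_def)

lemma sigmaK_mono: "sigmaK_ok G x \<Longrightarrow> H \<subseteq> G \<Longrightarrow> sigmaK_ok H x"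
  unfolding sigmaK_ok_def by blast

lemma sigmaD_K: "sigmaD_ok b x \<Longrightarrow> wf x \<Longrightarrow> sigmaK_ok {b} x"
  unfolding sigmaD_ok_def sigmaK_ok_def by (auto simp: subset_singleton_iff)

lemma topR: "derivable L \<Pi> (add_mset (Neg Bot) \<Lambda>)"
  by (rule derivable.negR) (rule derivable.botL)

locale step =
  fixes L :: logic and p :: 'p and a :: "'a::finite"
    and \<Gamma> \<Delta> :: "('p,'a) fm multiset"
    and f :: "('p,'a) fm multiset \<Rightarrow> ('p,'a) fm multiset \<Rightarrow> ('p,'a) fm"
  assumes wfGD: "\<forall>x\<in>#\<Gamma>+\<Delta>. wf x"
  and fP: "\<And>\<Gamma>' \<Delta>'. msize (\<Gamma>'+\<Delta>') < msize (\<Gamma>+\<Delta>) \<Longrightarrow> \<forall>x\<in>#\<Gamma>'+\<Delta>'. wf x \<Longrightarrow> UI L p a \<Gamma>' \<Delta>' (f \<Gamma>' \<Delta>')"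
begin

definition small :: "('p,'a) fm multiset \<Rightarrow> ('p,'a) fm multiset \<Rightarrow> bool" where
  "small \<Gamma>' \<Delta>' \<longleftrightarrow> msize (\<Gamma>'+\<Delta>') < msize (\<Gamma>+\<Delta>) \<and> (\<forall>x\<in>#\<Gamma>'+\<Delta>'. wf x)
     \<and> varsM (\<Gamma>'+\<Delta>') \<subseteq> varsM (\<Gamma>+\<Delta>) \<and> agtsM (\<Gamma>'+\<Delta>') \<subseteq> agtsM (\<Gamma>+\<Delta>)"

lemma fU:
  assumes "small \<Gamma>' \<Delta>'"
  shows "wf (f \<Gamma>' \<Delta>')" "vars (f \<Gamma>' \<Delta>') \<subseteq> varsM (\<Gamma>+\<Delta>) - {p}"
    "agts (f \<Gamma>' \<Delta>') \<subseteq> agtsM (\<Gamma>+\<Delta>) - {a}" "derivable L (add_mset (f \<Gamma>' \<Delta>') \<Gamma>') \<Delta>'"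
    "\<And>\<Pi> \<Lambda>. \<forall>x\<in>#\<Pi>+\<Lambda>. condf p a x \<Longrightarrow> derivable L (\<Pi>+\<Gamma>') (\<Delta>'+\<Lambda>) \<Longrightarrow> derivable L \<Pi> (add_mset (f \<Gamma>' \<Delta>') \<Lambda>)"
proof -
  have s1: "msize (\<Gamma>'+\<Delta>') < msize (\<Gamma>+\<Delta>)" and s2: "\<forall>x\<in>#\<Gamma>'+\<Delta>'. wf x"
    and s3: "varsM (\<Gamma>'+\<Delta>') \<subseteq> varsM (\<Gamma>+\<Delta>)" and s4: "agtsM (\<Gamma>'+\<Delta>') \<subseteq> agtsM (\<Gamma>+\<Delta>)"
    using assms unfolding small_def by simp_all
  have U: "UI L p a \<Gamma>' \<Delta>' (f \<Gamma>' \<Delta>')" by (rule fP[OF s1 s2])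
  have u1: "wf (f \<Gamma>' \<Delta>')" using U by (simp only: UI_def)
  have u2: "vars (f \<Gamma>' \<Delta>') \<subseteq> varsM (\<Gamma>'+\<Delta>') - {p}" using U by (simp only: UI_def)
  have u3: "agts (f \<Gamma>' \<Delta>') \<subseteq> agtsM (\<Gamma>'+\<Delta>') - {a}" using U by (simp only: UI_def)
  have u4: "derivable L (add_mset (f \<Gamma>' \<Delta>') \<Gamma>') \<Delta>'" using U by (simp only: UI_def)
  have u5: "\<forall>\<Pi> \<Lambda>. (\<forall>x \<in># \<Pi> + \<Lambda>. wf x)
          \<longrightarrow> p \<notin> varsM (\<Pi> + \<Lambda>) \<longrightarrow> a \<notin> agtsM (\<Pi> + \<Lambda>)
          \<longrightarrow> derivable L (\<Pi> + \<Gamma>') (\<Delta>' + \<Lambda>)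
          \<longrightarrow> derivable L \<Pi> (add_mset (f \<Gamma>' \<Delta>') \<Lambda>)" using U unfolding UI_def by (elim conjE) assumption
  show "wf (f \<Gamma>' \<Delta>')" by (rule u1)
  show "vars (f \<Gamma>' \<Delta>') \<subseteq> varsM (\<Gamma>+\<Delta>) - {p}" using u2 s3 by blast
  show "agts (f \<Gamma>' \<Delta>') \<subseteq> agtsM (\<Gamma>+\<Delta>) - {a}" using u3 s4 by blast
  show "derivable L (add_mset (f \<Gamma>' \<Delta>') \<Gamma>') \<Delta>'" by (rule u4)
  fix \<Pi> \<Lambda> assume c: "\<forall>x\<in>#\<Pi>+\<Lambda>. condf p a x" and d: "derivable L (\<Pi>+\<Gamma>') (\<Delta>'+\<Lambda>)"
  have c1: "\<forall>x \<in># \<Pi>+\<Lambda>. wf x" and c2: "p \<notin> varsM (\<Pi>+\<Lambda>)" and c3: "a \<notin> agtsM (\<Pi>+\<Lambda>)"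
    using c cond_iff[of "\<Pi>+\<Lambda>" p a] by simp_all
  show "derivable L \<Pi> (add_mset (f \<Gamma>' \<Delta>') \<Lambda>)" using u5 c1 c2 c3 d by blast
qed

definition gL :: "('p,'a) fm \<Rightarrow> ('p,'a) fm" where
  "gL x = (case x of
      Var q \<Rightarrow> if q = p then Bot else Neg (Var q)
    | Conj y z \<Rightarrow> f (add_mset y (add_mset z (\<Gamma> - {#x#}))) \<Delta>
    | Disj y z \<Rightarrow> Conj (f (add_mset y (\<Gamma> - {#x#})) \<Delta>) (f (add_mset z (\<Gamma> - {#x#})) \<Delta>)
    | Imp y z \<Rightarrow> Conj (f (\<Gamma> - {#x#}) (add_mset y \<Delta>)) (f (add_mset z (\<Gamma> - {#x#})) \<Delta>)
    | Neg y \<Rightarrow> f (\<Gamma> - {#x#}) (add_mset y \<Delta>)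
    | _ \<Rightarrow> Bot)"

definition gR :: "('p,'a) fm \<Rightarrow> ('p,'a) fm" where
  "gR x = (case x of
      Var q \<Rightarrow> if q = p then Bot else Var q
    | Conj y z \<Rightarrow> Conj (f \<Gamma> (add_mset y (\<Delta> - {#x#}))) (f \<Gamma> (add_mset z (\<Delta> - {#x#})))
    | Disj y z \<Rightarrow> f \<Gamma> (add_mset y (add_mset z (\<Delta> - {#x#})))
    | Imp y z \<Rightarrow> f (add_mset y \<Gamma>) (add_mset z (\<Delta> - {#x#}))
    | Neg y \<Rightarrow> f (add_mset y \<Gamma>) (\<Delta> - {#x#})
    | _ \<Rightarrow> Bot)"

definition condA :: "'a set \<Rightarrow> ('p,'a) fm multiset \<Rightarrow> bool" where
  "condA H N \<longleftrightarrow> H \<noteq> {} \<and> a \<notin> H \<and> H \<subseteq> agtsM \<Gamma> \<and> N \<noteq> {#} \<and> N \<subseteq># \<Gamma>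
     \<and> (\<forall>x\<in>#N. boxed x \<and> boxgrp x \<subseteq> H) \<and> (\<forall>x\<in>#\<Gamma> - N. sigmaK_ok H x) \<and> (\<forall>x\<in>#\<Delta>. omega_ok x)"

definition gA :: "'a set \<times> ('p,'a) fm multiset \<Rightarrow> ('p,'a) fm" where
  "gA HN = (case HN of (H, N) \<Rightarrow>
     if condA H N then Neg (D H (Neg (f (image_mset unbox N) {#}))) else Bot)"

definition condB :: "('p,'a) fm \<Rightarrow> ('p,'a) fm multiset \<Rightarrow> bool" where
  "condB y N \<longleftrightarrow> y \<in># \<Delta> \<and> boxed y \<and> boxgrp y - {a} \<noteq> {} \<and> N \<subseteq># \<Gamma>
     \<and> (\<forall>x\<in>#N. boxed x \<and> boxgrp x \<subseteq> boxgrp y) \<and> (\<forall>x\<in>#\<Gamma> - N. sigmaK_ok (boxgrp y) x)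
     \<and> (\<forall>x\<in>#\<Delta> - {#y#}. omega_ok x)"

definition gB :: "('p,'a) fm \<times> ('p,'a) fm multiset \<Rightarrow> ('p,'a) fm" where
  "gB yN = (case yN of (y, N) \<Rightarrow>
     if condB y N then D (boxgrp y - {a}) (f (image_mset unbox N) {#unbox y#}) else Bot)"

definition Sset :: "('p,'a) fm set" where
  "Sset = (if derivable L \<Gamma> \<Delta> then {Neg Bot} else {}) \<union> gL ` set_mset \<Gamma> \<union> gR ` set_mset \<Delta>
     \<union> gA ` (UNIV \<times> {N. N \<subseteq># \<Gamma>}) \<union> gB ` (set_mset \<Delta> \<times> {N. N \<subseteq># \<Gamma>})"

lemma Sset_finite: "finite Sset"
  unfolding Sset_def using finite_submsets by auto

definition Alist :: "('p,'a) fm list" where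
  "Alist = (SOME xs. set xs = Sset)"

lemma set_Alist: "set Alist = Sset"
  unfolding Alist_def using someI_ex[OF finite_list[OF Sset_finite]] .

definition A :: "('p,'a) fm" where
  "A = disjs Alist"

lemma inS: "x \<in> Sset \<Longrightarrow> derivable L \<Pi> (add_mset x \<Lambda>) \<Longrightarrow> derivable L \<Pi> (add_mset A \<Lambda>)"
  unfolding A_def using disjs_R set_Alist by metis

definition good :: "('p,'a) fm \<Rightarrow> bool" where
  "good x \<longleftrightarrow> wf x \<and> vars x \<subseteq> varsM (\<Gamma>+\<Delta>) - {p} \<and> agts x \<subseteq> agtsM (\<Gamma>+\<Delta>) - {a}
     \<and> derivable L (add_mset x \<Gamma>) \<Delta>"

lemma good_Bot: "good Bot"
  unfolding good_def by (simp add: derivable.botL)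

lemma good_gL:
  assumes "x \<in># \<Gamma>"
  shows "good (gL x)"
proof -
  obtain \<Gamma>0 where G: "\<Gamma> = add_mset x \<Gamma>0" using assms by (metis insert_DiffM)
  have G0: "\<Gamma> - {#x#} = \<Gamma>0" using G by simp
  show ?thesis
  proof (cases x)
    case (Var q)
    show ?thesis
    proof (cases "q = p")
      case True
      then show ?thesis unfolding gL_def using Var good_Bot by simp
    next
      case False
      have gl: "gL x = Neg (Var q)" unfolding gL_def using Var False by simp
      have "derivable L \<Gamma> (add_mset (Var q) \<Delta>)" unfolding G Var by (rule derivable.init)
      then have "derivable L (add_mset (Neg (Var q)) \<Gamma>) \<Delta>" by (rule derivable.negL)
      then show ?thesis unfolding good_def gl using False G Var by auto
    qed
  next
    case Bot
    then show ?thesis unfolding gL_def using good_Bot by simp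
  next
    case (D H y)
    then show ?thesis unfolding gL_def using good_Bot by simp
  next
    case (Conj y z)
    define B where "B = f (add_mset y (add_mset z \<Gamma>0)) \<Delta>"
    have gl: "gL x = B" unfolding gL_def B_def using Conj G0 by simp
    have sm: "small (add_mset y (add_mset z \<Gamma>0)) \<Delta>" using wfGD unfolding small_def unfolding G Conj by auto
    note F = fU[OF sm, folded B_def]
    have "derivable L (add_mset (Conj y z) (add_mset B \<Gamma>0)) \<Delta>"
      using derivable.conjL[of L y z "add_mset B \<Gamma>0" \<Delta>] F(4) by (simp add: add_mset_commute)
    then have "derivable L (add_mset B \<Gamma>) \<Delta>" unfolding G Conj by (simp add: add_mset_commute)
    then show ?thesis unfolding good_def gl using F(1-3) by simp
  next
    case (Disj y z)
    define B1 where "B1 = f (add_mset y \<Gamma>0) \<Delta>"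
    define B2 where "B2 = f (add_mset z \<Gamma>0) \<Delta>"
    have gl: "gL x = Conj B1 B2" unfolding gL_def B1_def B2_def using Disj G0 by simp
    have sm1: "small (add_mset y \<Gamma>0) \<Delta>" using wfGD unfolding small_def unfolding G Disj by auto
    have sm2: "small (add_mset z \<Gamma>0) \<Delta>" using wfGD unfolding small_def unfolding G Disj by auto
    note F1 = fU[OF sm1, folded B1_def] and F2 = fU[OF sm2, folded B2_def]
    have d1: "derivable L (add_mset y (add_mset B1 (add_mset B2 \<Gamma>0))) \<Delta>"
      using wL[OF F1(4), of B2] by (simp add: add_mset_commute)
    have d2: "derivable L (add_mset z (add_mset B1 (add_mset B2 \<Gamma>0))) \<Delta>"
      using wL[OF F2(4), of B1] by (simp add: add_mset_commute)
    have "derivable L (add_mset (Disj y z) (add_mset B1 (add_mset B2 \<Gamma>0))) \<Delta>"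
      by (rule derivable.disjL[OF d1 d2])
    then have "derivable L (add_mset B1 (add_mset B2 \<Gamma>)) \<Delta>" unfolding G Disj by (simp add: add_mset_commute)
    then have "derivable L (add_mset (Conj B1 B2) \<Gamma>) \<Delta>" by (rule derivable.conjL)
    then show ?thesis unfolding good_def gl using F1(1-3) F2(1-3) by simp
  next
    case (Imp y z)
    define B1 where "B1 = f \<Gamma>0 (add_mset y \<Delta>)"
    define B2 where "B2 = f (add_mset z \<Gamma>0) \<Delta>"
    have gl: "gL x = Conj B1 B2" unfolding gL_def B1_def B2_def using Imp G0 by simp
    have sm1: "small \<Gamma>0 (add_mset y \<Delta>)" using wfGD unfolding small_def unfolding G Imp by auto
    have sm2: "small (add_mset z \<Gamma>0) \<Delta>" using wfGD unfolding small_def unfolding G Imp by auto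
    note F1 = fU[OF sm1, folded B1_def] and F2 = fU[OF sm2, folded B2_def]
    have d1: "derivable L (add_mset B1 (add_mset B2 \<Gamma>0)) (add_mset y \<Delta>)"
      using wL[OF F1(4), of B2] by (simp add: add_mset_commute)
    have d2: "derivable L (add_mset z (add_mset B1 (add_mset B2 \<Gamma>0))) \<Delta>"
      using wL[OF F2(4), of B1] by (simp add: add_mset_commute)
    have "derivable L (add_mset (Imp y z) (add_mset B1 (add_mset B2 \<Gamma>0))) \<Delta>"
      by (rule derivable.impL[OF d1 d2])
    then have "derivable L (add_mset B1 (add_mset B2 \<Gamma>)) \<Delta>" unfolding G Imp by (simp add: add_mset_commute)
    then have "derivable L (add_mset (Conj B1 B2) \<Gamma>) \<Delta>" by (rule derivable.conjL)
    then show ?thesis unfolding good_def gl using F1(1-3) F2(1-3) by simp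
  next
    case (Neg y)
    define B where "B = f \<Gamma>0 (add_mset y \<Delta>)"
    have gl: "gL x = B" unfolding gL_def B_def using Neg G0 by simp
    have sm: "small \<Gamma>0 (add_mset y \<Delta>)" using wfGD unfolding small_def unfolding G Neg by auto
    note F = fU[OF sm, folded B_def]
    have "derivable L (add_mset (Neg y) (add_mset B \<Gamma>0)) \<Delta>"
      using derivable.negL[OF F(4)] .
    then have "derivable L (add_mset B \<Gamma>) \<Delta>" unfolding G Neg by (simp add: add_mset_commute)
    then show ?thesis unfolding good_def gl using F(1-3) by simp
  qed
qed

lemma good_gR:
  assumes "x \<in># \<Delta>"
  shows "good (gR x)"
proof -
  obtain \<Delta>0 where G: "\<Delta> = add_mset x \<Delta>0" using assms by (metis insert_DiffM)
  have G0: "\<Delta> - {#x#} = \<Delta>0" using G by simp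
  show ?thesis
  proof (cases x)
    case (Var q)
    show ?thesis
    proof (cases "q = p")
      case True
      then show ?thesis unfolding gR_def using Var good_Bot by simp
    next
      case False
      have gl: "gR x = Var q" unfolding gR_def using Var False by simp
      have "derivable L (add_mset (Var q) \<Gamma>) \<Delta>" unfolding G Var by (rule derivable.init)
      then show ?thesis unfolding good_def gl using False G Var by auto
    qed
  next
    case Bot
    then show ?thesis unfolding gR_def using good_Bot by simp
  next
    case (D H y)
    then show ?thesis unfolding gR_def using good_Bot by simp
  next
    case (Conj y z)
    define B1 where "B1 = f \<Gamma> (add_mset y \<Delta>0)"
    define B2 where "B2 = f \<Gamma> (add_mset z \<Delta>0)"
    have gl: "gR x = Conj B1 B2" unfolding gR_def B1_def B2_def using Conj G0 by simp
    have sm1: "small \<Gamma> (add_mset y \<Delta>0)" using wfGD unfolding small_def unfolding G Conj by auto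
    have sm2: "small \<Gamma> (add_mset z \<Delta>0)" using wfGD unfolding small_def unfolding G Conj by auto
    note F1 = fU[OF sm1, folded B1_def] and F2 = fU[OF sm2, folded B2_def]
    have d1: "derivable L (add_mset B1 (add_mset B2 \<Gamma>)) (add_mset y \<Delta>0)"
      using wL[OF F1(4), of B2] by (simp add: add_mset_commute)
    have d2: "derivable L (add_mset B1 (add_mset B2 \<Gamma>)) (add_mset z \<Delta>0)"
      using wL[OF F2(4), of B1] by (simp add: add_mset_commute)
    have "derivable L (add_mset B1 (add_mset B2 \<Gamma>)) (add_mset (Conj y z) \<Delta>0)"
      by (rule derivable.conjR[OF d1 d2])
    then have "derivable L (add_mset (Conj B1 B2) \<Gamma>) \<Delta>" unfolding G Conj by (rule derivable.conjL)
    then show ?thesis unfolding good_def gl using F1(1-3) F2(1-3) by simp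
  next
    case (Disj y z)
    define B where "B = f \<Gamma> (add_mset y (add_mset z \<Delta>0))"
    have gl: "gR x = B" unfolding gR_def B_def using Disj G0 by simp
    have sm: "small \<Gamma> (add_mset y (add_mset z \<Delta>0))" using wfGD unfolding small_def unfolding G Disj by auto
    note F = fU[OF sm, folded B_def]
    have "derivable L (add_mset B \<Gamma>) \<Delta>" unfolding G Disj by (rule derivable.disjR[OF F(4)])
    then show ?thesis unfolding good_def gl using F(1-3) by simp
  next
    case (Imp y z)
    define B where "B = f (add_mset y \<Gamma>) (add_mset z \<Delta>0)"
    have gl: "gR x = B" unfolding gR_def B_def using Imp G0 by simp
    have sm: "small (add_mset y \<Gamma>) (add_mset z \<Delta>0)" using wfGD unfolding small_def unfolding G Imp by auto
    note F = fU[OF sm, folded B_def]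
    have "derivable L (add_mset y (add_mset B \<Gamma>)) (add_mset z \<Delta>0)"
      using F(4) by (simp add: add_mset_commute)
    then have "derivable L (add_mset B \<Gamma>) \<Delta>" unfolding G Imp by (rule derivable.impR)
    then show ?thesis unfolding good_def gl using F(1-3) by simp
  next
    case (Neg y)
    define B where "B = f (add_mset y \<Gamma>) \<Delta>0"
    have gl: "gR x = B" unfolding gR_def B_def using Neg G0 by simp
    have sm: "small (add_mset y \<Gamma>) \<Delta>0" using wfGD unfolding small_def unfolding G Neg by auto
    note F = fU[OF sm, folded B_def]
    have "derivable L (add_mset y (add_mset B \<Gamma>)) \<Delta>0"
      using F(4) by (simp add: add_mset_commute)
    then have "derivable L (add_mset B \<Gamma>) \<Delta>" unfolding G Neg by (rule derivable.negR)
    then show ?thesis unfolding good_def gl using F(1-3) by simp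
  qed
qed

lemma good_gA: "good (gA HN)"
proof (cases HN)
  case (Pair H N)
  show ?thesis
  proof (cases "condA H N")
    case False then show ?thesis unfolding gA_def Pair using good_Bot by simp
  next
    case True
    have c: "H \<noteq> {}" "a \<notin> H" "H \<subseteq> agtsM \<Gamma>" "N \<noteq> {#}" "N \<subseteq># \<Gamma>" "\<forall>x\<in>#N. boxed x \<and> boxgrp x \<subseteq> H"
      "\<forall>x\<in>#\<Gamma> - N. sigmaK_ok H x" "\<forall>x\<in>#\<Delta>. omega_ok x"
      using True unfolding condA_def by auto
    define B where "B = f (image_mset unbox N) {#}"
    have gl: "gA HN = Neg (D H (Neg B))" unfolding gA_def Pair B_def using True by simp
    have bx: "\<forall>x\<in>#N. boxed x" using c(6) by blast
    have wN: "\<forall>x\<in>#N. boxed x \<and> wf x" using bx wfGD c(5) by (auto dest: mset_subset_eqD)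
    have ms: "msize (image_mset unbox N) < msize N"
      using unbox_msize[OF bx] c(4) by (metis add_less_cancel_left nat_arith.rule0 size_eq_0_iff_empty zero_less_iff_neq_zero)
    have sm: "small (image_mset unbox N) {#}" unfolding small_def
      using ms msize_mono[OF c(5)] unbox_wf[OF wN] unbox_vars[OF bx] unbox_agts[OF bx]
        varsM_mono[OF c(5)] agtsM_mono[OF c(5)] by auto
    note F = fU[OF sm, folded B_def]
    have d1: "derivable L (image_mset unbox N) {#Neg B#}" using derivable.negR[OF F(4)] by simp
    define M where "M = image_mset (\<lambda>x. (boxgrp x, unbox x)) N"
    have d2: "derivable L \<Gamma> (add_mset (D H (Neg B)) \<Delta>)"
    proof (rule DK'[where M=M and \<Sigma>="\<Gamma> - N" and \<Omega>=\<Delta> and G=H and \<beta>="Neg B"])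
      show "derivable L (image_mset snd M) {#Neg B#}" using d1 by (simp add: M_def multiset.map_comp o_def)
      show "\<forall>(Gi, _)\<in>#M. Gi \<subseteq> H" using c(6) by (auto simp: M_def)
      show "\<forall>x\<in>#\<Gamma> - N. sigmaK_ok H x" by (rule c(7))
      show "\<forall>x\<in>#\<Delta>. omega_ok x" by (rule c(8))
      show "\<Gamma> = \<Gamma> - N + image_mset Dp M" using Dp_unbox[OF bx] c(5) by (simp add: M_def)
    qed simp
    have d3: "derivable L (add_mset (Neg (D H (Neg B))) \<Gamma>) \<Delta>" by (rule derivable.negL[OF d2])
    show ?thesis unfolding good_def gl using c(1-3) F(1-3) d3 by auto
  qed
qed

lemma good_gB: "good (gB yN)"
proof (cases yN)
  case (Pair y N)
  show ?thesis
  proof (cases "condB y N")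
    case False then show ?thesis unfolding gB_def Pair using good_Bot by simp
  next
    case True
    have c: "y \<in># \<Delta>" "boxed y" "boxgrp y - {a} \<noteq> {}" "N \<subseteq># \<Gamma>" "\<forall>x\<in>#N. boxed x \<and> boxgrp x \<subseteq> boxgrp y"
      "\<forall>x\<in>#\<Gamma> - N. sigmaK_ok (boxgrp y) x" "\<forall>x\<in>#\<Delta> - {#y#}. omega_ok x"
      using True unfolding condB_def by auto
    obtain G \<beta> where y: "y = D G \<beta>" using c(2) by (cases y) auto
    obtain \<Delta>0 where D0: "\<Delta> = add_mset y \<Delta>0" using c(1) by (metis insert_DiffM)
    have D0': "\<Delta> - {#y#} = \<Delta>0" using D0 by simp
    define B where "B = f (image_mset unbox N) {#\<beta>#}"
    have gl: "gB yN = D (G - {a}) B" unfolding gB_def Pair B_def using True y by simp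
    have bx: "\<forall>x\<in>#N. boxed x" using c(5) by blast
    have wN: "\<forall>x\<in>#N. boxed x \<and> wf x" using bx wfGD c(4) by (auto dest: mset_subset_eqD)
    have ms: "msize (image_mset unbox N) \<le> msize N"
      using unbox_msize[OF bx] by linarith
    have wy: "wf y" using wfGD c(1) by auto
    have sm: "small (image_mset unbox N) {#\<beta>#}" unfolding small_def
      using ms msize_mono[OF c(4)] unbox_wf[OF wN] unbox_vars[OF bx] unbox_agts[OF bx]
        varsM_mono[OF c(4)] agtsM_mono[OF c(4)] wy unfolding D0 y by auto
    note F = fU[OF sm, folded B_def]
    define M where "M = add_mset (G - {a}, B) (image_mset (\<lambda>x. (boxgrp x, unbox x)) N)"
    have d2: "derivable L (add_mset (D (G - {a}) B) \<Gamma>) \<Delta>"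
    proof (rule DK'[where M=M and \<Sigma>="\<Gamma> - N" and \<Omega>=\<Delta>0 and G=G and \<beta>=\<beta>])
      show "derivable L (image_mset snd M) {#\<beta>#}" using F(4) by (simp add: M_def multiset.map_comp o_def)
      show "\<forall>(Gi, _)\<in>#M. Gi \<subseteq> G" using c(5) y by (auto simp: M_def)
      show "\<forall>x\<in>#\<Gamma> - N. sigmaK_ok G x" using c(6) y by simp
      show "\<forall>x\<in>#\<Delta>0. omega_ok x" using c(7) D0' by simp
      show "add_mset (D (G - {a}) B) \<Gamma> = \<Gamma> - N + image_mset Dp M" using Dp_unbox[OF bx] c(4) by (simp add: M_def)
      show "\<Delta> = add_mset (D G \<beta>) \<Delta>0" using D0 y by simp
    qed
    have aG: "G \<subseteq> agtsM \<Delta>" using D0 y by auto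
    show ?thesis unfolding good_def gl using c(3) y F(1-3) d2 aG by auto
  qed
qed

lemma Sset_good: "x \<in> Sset \<Longrightarrow> good x"
proof -
  assume x: "x \<in> Sset"
  have "derivable L \<Gamma> \<Delta> \<Longrightarrow> good (Neg Bot)" unfolding good_def using wL by auto
  then show "good x" using x good_gL good_gR good_gA good_gB unfolding Sset_def
    by (auto split: if_splits)
qed

lemma A_good: "wf A" "vars A \<subseteq> varsM (\<Gamma>+\<Delta>) - {p}" "agts A \<subseteq> agtsM (\<Gamma>+\<Delta>) - {a}"
  "derivable L (add_mset A \<Gamma>) \<Delta>"
proof -
  have g: "\<forall>x\<in>set Alist. good x" using Sset_good set_Alist by blast
  show "wf A" unfolding A_def disjs_props using g good_def by blast
  show "vars A \<subseteq> varsM (\<Gamma>+\<Delta>) - {p}" unfolding A_def disjs_props using g good_def by blast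
  show "agts A \<subseteq> agtsM (\<Gamma>+\<Delta>) - {a}" unfolding A_def disjs_props using g good_def by blast
  show "derivable L (add_mset A \<Gamma>) \<Delta>" unfolding A_def using g good_def disjs_L by blast
qed

lemma smA: assumes "condA H N" shows "small (image_mset unbox N) {#}"
proof -
  have c: "N \<noteq> {#}" "N \<subseteq># \<Gamma>" "\<forall>x\<in>#N. boxed x"
    using assms unfolding condA_def by auto
  have wN: "\<forall>x\<in>#N. boxed x \<and> wf x" using c(3) wfGD c(2) by (auto dest: mset_subset_eqD)
  have ms: "msize (image_mset unbox N) < msize N"
    using unbox_msize[OF c(3)] c(1) by (metis add_less_cancel_left nat_arith.rule0 size_eq_0_iff_empty zero_less_iff_neq_zero)
  show ?thesis unfolding small_def
    using ms msize_mono[OF c(2)] unbox_wf[OF wN] unbox_vars[OF c(3)] unbox_agts[OF c(3)]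
      varsM_mono[OF c(2)] agtsM_mono[OF c(2)] by auto
qed

lemma smB: assumes "condB y N" shows "small (image_mset unbox N) {#unbox y#}"
proof -
  have c: "y \<in># \<Delta>" "boxed y" "N \<subseteq># \<Gamma>" "\<forall>x\<in>#N. boxed x"
    using assms unfolding condB_def by auto
  obtain G \<beta> where y: "y = D G \<beta>" using c(2) by (cases y) auto
  obtain \<Delta>0 where D0: "\<Delta> = add_mset y \<Delta>0" using c(1) by (metis insert_DiffM)
  have wN: "\<forall>x\<in>#N. boxed x \<and> wf x" using c(4) wfGD c(3) by (auto dest: mset_subset_eqD)
  have ms: "msize (image_mset unbox N) \<le> msize N"
    using unbox_msize[OF c(4)] by linarith
  have wy: "wf y" using wfGD c(1) by auto
  show ?thesis unfolding small_def
    using ms msize_mono[OF c(3)] unbox_wf[OF wN] unbox_vars[OF c(4)] unbox_agts[OF c(4)]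
      varsM_mono[OF c(3)] agtsM_mono[OF c(3)] wy unfolding D0 y by auto
qed

lemma gL_in: "x \<in># \<Gamma> \<Longrightarrow> gL x \<in> Sset" unfolding Sset_def by blast
lemma gR_in: "x \<in># \<Delta> \<Longrightarrow> gR x \<in> Sset" unfolding Sset_def by blast
lemma gA_in: "N \<subseteq># \<Gamma> \<Longrightarrow> gA (H, N) \<in> Sset" unfolding Sset_def by blast
lemma gB_in: "y \<in># \<Delta> \<Longrightarrow> N \<subseteq># \<Gamma> \<Longrightarrow> gB (y, N) \<in> Sset" unfolding Sset_def by blast
lemma top_in: "derivable L \<Gamma> \<Delta> \<Longrightarrow> Neg Bot \<in> Sset" unfolding Sset_def by simp
lemma top_case: "derivable L \<Gamma> \<Delta> \<Longrightarrow> derivable L \<Pi> (add_mset A \<Lambda>)"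
  using inS[OF top_in topR] by blast

end

context step begin

lemma inner:
  assumes "derivable L S T"
  shows "S = \<Pi> + \<Gamma> \<Longrightarrow> T = \<Delta> + \<Lambda> \<Longrightarrow> \<forall>x\<in>#\<Pi>+\<Lambda>. condf p a x \<Longrightarrow> derivable L \<Pi> (add_mset A \<Lambda>)"
  using assms
proof (induction arbitrary: \<Pi> \<Lambda> rule: derivable.induct)
  case (init q G1 D1)
  from split_add[OF init.prems(1)] split_add[OF init.prems(2)] show ?case
  proof (elim disjE exE conjE)
    fix \<Pi>0 \<Lambda>0 assume P: "\<Pi> = add_mset (Var q) \<Pi>0" and La: "\<Lambda> = add_mset (Var q) \<Lambda>0"
    show ?thesis using derivable.init[of L q \<Pi>0 "add_mset A \<Lambda>0"] P La by (simp add: add_mset_commute)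
  next
    fix \<Gamma>0 \<Delta>0 assume G: "\<Gamma> = add_mset (Var q) \<Gamma>0" and De: "\<Delta> = add_mset (Var q) \<Delta>0"
    have "derivable L \<Gamma> \<Delta>" unfolding G De by (rule derivable.init)
    then show ?thesis by (rule top_case)
  next
    fix \<Pi>0 \<Delta>0 assume P: "\<Pi> = add_mset (Var q) \<Pi>0" and De: "\<Delta> = add_mset (Var q) \<Delta>0"
    have qp: "q \<noteq> p" using init.prems(3) P by simp
    have v: "gR (Var q) = Var q" unfolding gR_def using qp by simp
    have "derivable L \<Pi> (add_mset (Var q) \<Lambda>)" unfolding P by (rule derivable.init)
    then show ?thesis using inS[OF gR_in] v De by fastforce
  next
    fix \<Gamma>0 \<Lambda>0 assume G: "\<Gamma> = add_mset (Var q) \<Gamma>0" and La: "\<Lambda> = add_mset (Var q) \<Lambda>0"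
    have qp: "q \<noteq> p" using init.prems(3) La by simp
    have v: "gL (Var q) = Neg (Var q)" unfolding gL_def using qp by simp
    have "derivable L (add_mset (Var q) \<Pi>) \<Lambda>" unfolding La by (rule derivable.init)
    then have "derivable L \<Pi> (add_mset (Neg (Var q)) \<Lambda>)" by (rule derivable.negR)
    then show ?thesis using inS[OF gL_in] v G by fastforce
  qed
next
  case (botL G1 D1)
  from split_add[OF botL.prems(1)] show ?case
  proof (elim disjE exE conjE)
    fix \<Pi>0 assume P: "\<Pi> = add_mset Bot \<Pi>0"
    show ?thesis unfolding P by (rule derivable.botL)
  next
    fix \<Gamma>0 assume G: "\<Gamma> = add_mset Bot \<Gamma>0"
    have "derivable L \<Gamma> \<Delta>" unfolding G by (rule derivable.botL)
    then show ?thesis by (rule top_case)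
  qed
next
  case (conjR G1 a1 D1 a2)
  from split_add[OF conjR.prems(2)] show ?case
  proof (elim disjE exE conjE)
    fix \<Delta>0 assume De: "\<Delta> = add_mset (Conj a1 a2) \<Delta>0" and D1: "D1 = \<Delta>0 + \<Lambda>"
    define B1 where "B1 = f \<Gamma> (add_mset a1 \<Delta>0)"
    define B2 where "B2 = f \<Gamma> (add_mset a2 \<Delta>0)"
    have v: "gR (Conj a1 a2) = Conj B1 B2" unfolding gR_def B1_def B2_def using De by simp
    have sm1: "small \<Gamma> (add_mset a1 \<Delta>0)" using wfGD unfolding small_def unfolding De by auto
    have sm2: "small \<Gamma> (add_mset a2 \<Delta>0)" using wfGD unfolding small_def unfolding De by auto
    have d1: "derivable L \<Pi> (add_mset B1 \<Lambda>)" unfolding B1_def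
      by (rule fU(5)[OF sm1 conjR.prems(3)]) (use conjR.hyps(1) conjR.prems(1) D1 in simp)
    have d2: "derivable L \<Pi> (add_mset B2 \<Lambda>)" unfolding B2_def
      by (rule fU(5)[OF sm2 conjR.prems(3)]) (use conjR.hyps(2) conjR.prems(1) D1 in simp)
    have "derivable L \<Pi> (add_mset (Conj B1 B2) \<Lambda>)" by (rule derivable.conjR[OF d1 d2])
    then show ?thesis using inS[OF gR_in] v De by fastforce
  next
    fix \<Lambda>0 assume La: "\<Lambda> = add_mset (Conj a1 a2) \<Lambda>0" and D1: "D1 = \<Delta> + \<Lambda>0"
    have d1: "derivable L \<Pi> (add_mset A (add_mset a1 \<Lambda>0))"
      by (rule conjR.IH(1)) (use conjR.prems D1 La in auto)
    have d2: "derivable L \<Pi> (add_mset A (add_mset a2 \<Lambda>0))"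
      by (rule conjR.IH(2)) (use conjR.prems D1 La in auto)
    show ?thesis using derivable.conjR[of L \<Pi> a1 "add_mset A \<Lambda>0" a2] d1 d2 La by (simp add: add_mset_commute)
  qed
next
  case (conjL a1 a2 G1 D1)
  from split_add[OF conjL.prems(1)] show ?case
  proof (elim disjE exE conjE)
    fix \<Pi>0 assume P: "\<Pi> = add_mset (Conj a1 a2) \<Pi>0" and G1: "G1 = \<Pi>0 + \<Gamma>"
    have d: "derivable L (add_mset a1 (add_mset a2 \<Pi>0)) (add_mset A \<Lambda>)"
      by (rule conjL.IH) (use conjL.prems G1 P in auto)
    show ?thesis unfolding P by (rule derivable.conjL[OF d])
  next
    fix \<Gamma>0 assume G: "\<Gamma> = add_mset (Conj a1 a2) \<Gamma>0" and G1: "G1 = \<Pi> + \<Gamma>0"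
    define B where "B = f (add_mset a1 (add_mset a2 \<Gamma>0)) \<Delta>"
    have v: "gL (Conj a1 a2) = B" unfolding gL_def B_def using G by simp
    have sm: "small (add_mset a1 (add_mset a2 \<Gamma>0)) \<Delta>" using wfGD unfolding small_def unfolding G by auto
    have d: "derivable L \<Pi> (add_mset B \<Lambda>)" unfolding B_def
      by (rule fU(5)[OF sm conjL.prems(3)]) (use conjL.hyps(1) conjL.prems(2) G1 in simp)
    then show ?thesis using inS[OF gL_in] v G by fastforce
  qed
next
  case (disjR G1 a1 a2 D1)
  from split_add[OF disjR.prems(2)] show ?case
  proof (elim disjE exE conjE)
    fix \<Delta>0 assume De: "\<Delta> = add_mset (Disj a1 a2) \<Delta>0" and D1: "D1 = \<Delta>0 + \<Lambda>"
    define B where "B = f \<Gamma> (add_mset a1 (add_mset a2 \<Delta>0))"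
    have v: "gR (Disj a1 a2) = B" unfolding gR_def B_def using De by simp
    have sm: "small \<Gamma> (add_mset a1 (add_mset a2 \<Delta>0))" using wfGD unfolding small_def unfolding De by auto
    have d: "derivable L \<Pi> (add_mset B \<Lambda>)" unfolding B_def
      by (rule fU(5)[OF sm disjR.prems(3)]) (use disjR.hyps(1) disjR.prems(1) D1 in simp)
    then show ?thesis using inS[OF gR_in] v De by fastforce
  next
    fix \<Lambda>0 assume La: "\<Lambda> = add_mset (Disj a1 a2) \<Lambda>0" and D1: "D1 = \<Delta> + \<Lambda>0"
    have d: "derivable L \<Pi> (add_mset A (add_mset a1 (add_mset a2 \<Lambda>0)))"
      by (rule disjR.IH) (use disjR.prems D1 La in auto)
    show ?thesis using derivable.disjR[of L \<Pi> a1 a2 "add_mset A \<Lambda>0"] d La by (simp add: add_mset_commute)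
  qed
next
  case (disjL a1 G1 D1 a2)
  from split_add[OF disjL.prems(1)] show ?case
  proof (elim disjE exE conjE)
    fix \<Pi>0 assume P: "\<Pi> = add_mset (Disj a1 a2) \<Pi>0" and G1: "G1 = \<Pi>0 + \<Gamma>"
    have d1: "derivable L (add_mset a1 \<Pi>0) (add_mset A \<Lambda>)"
      by (rule disjL.IH(1)) (use disjL.prems G1 P in auto)
    have d2: "derivable L (add_mset a2 \<Pi>0) (add_mset A \<Lambda>)"
      by (rule disjL.IH(2)) (use disjL.prems G1 P in auto)
    show ?thesis unfolding P by (rule derivable.disjL[OF d1 d2])
  next
    fix \<Gamma>0 assume G: "\<Gamma> = add_mset (Disj a1 a2) \<Gamma>0" and G1: "G1 = \<Pi> + \<Gamma>0"
    define B1 where "B1 = f (add_mset a1 \<Gamma>0) \<Delta>"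
    define B2 where "B2 = f (add_mset a2 \<Gamma>0) \<Delta>"
    have v: "gL (Disj a1 a2) = Conj B1 B2" unfolding gL_def B1_def B2_def using G by simp
    have sm1: "small (add_mset a1 \<Gamma>0) \<Delta>" using wfGD unfolding small_def unfolding G by auto
    have sm2: "small (add_mset a2 \<Gamma>0) \<Delta>" using wfGD unfolding small_def unfolding G by auto
    have d1: "derivable L \<Pi> (add_mset B1 \<Lambda>)" unfolding B1_def
      by (rule fU(5)[OF sm1 disjL.prems(3)]) (use disjL.hyps(1) disjL.prems(2) G1 in simp)
    have d2: "derivable L \<Pi> (add_mset B2 \<Lambda>)" unfolding B2_def
      by (rule fU(5)[OF sm2 disjL.prems(3)]) (use disjL.hyps(2) disjL.prems(2) G1 in simp)
    have "derivable L \<Pi> (add_mset (Conj B1 B2) \<Lambda>)" by (rule derivable.conjR[OF d1 d2])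
    then show ?thesis using inS[OF gL_in] v G by fastforce
  qed
next
  case (impR a1 G1 a2 D1)
  from split_add[OF impR.prems(2)] show ?case
  proof (elim disjE exE conjE)
    fix \<Delta>0 assume De: "\<Delta> = add_mset (Imp a1 a2) \<Delta>0" and D1: "D1 = \<Delta>0 + \<Lambda>"
    define B where "B = f (add_mset a1 \<Gamma>) (add_mset a2 \<Delta>0)"
    have v: "gR (Imp a1 a2) = B" unfolding gR_def B_def using De by simp
    have sm: "small (add_mset a1 \<Gamma>) (add_mset a2 \<Delta>0)" using wfGD unfolding small_def unfolding De by auto
    have d: "derivable L \<Pi> (add_mset B \<Lambda>)" unfolding B_def
      by (rule fU(5)[OF sm impR.prems(3)]) (use impR.hyps(1) impR.prems(1) D1 in simp)
    then show ?thesis using inS[OF gR_in] v De by fastforce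
  next
    fix \<Lambda>0 assume La: "\<Lambda> = add_mset (Imp a1 a2) \<Lambda>0" and D1: "D1 = \<Delta> + \<Lambda>0"
    have d: "derivable L (add_mset a1 \<Pi>) (add_mset A (add_mset a2 \<Lambda>0))"
      by (rule impR.IH) (use impR.prems D1 La in auto)
    show ?thesis using derivable.impR[of L a1 \<Pi> a2 "add_mset A \<Lambda>0"] d La by (simp add: add_mset_commute)
  qed
next
  case (impL G1 a1 D1 a2)
  from split_add[OF impL.prems(1)] show ?case
  proof (elim disjE exE conjE)
    fix \<Pi>0 assume P: "\<Pi> = add_mset (Imp a1 a2) \<Pi>0" and G1: "G1 = \<Pi>0 + \<Gamma>"
    have d1: "derivable L \<Pi>0 (add_mset A (add_mset a1 \<Lambda>))"
      by (rule impL.IH(1)) (use impL.prems G1 P in auto)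
    have d2: "derivable L (add_mset a2 \<Pi>0) (add_mset A \<Lambda>)"
      by (rule impL.IH(2)) (use impL.prems G1 P in auto)
    have d1': "derivable L \<Pi>0 (add_mset a1 (add_mset A \<Lambda>))" using d1 by (simp add: add_mset_commute)
    show ?thesis unfolding P by (rule derivable.impL[OF d1' d2])
  next
    fix \<Gamma>0 assume G: "\<Gamma> = add_mset (Imp a1 a2) \<Gamma>0" and G1: "G1 = \<Pi> + \<Gamma>0"
    define B1 where "B1 = f \<Gamma>0 (add_mset a1 \<Delta>)"
    define B2 where "B2 = f (add_mset a2 \<Gamma>0) \<Delta>"
    have v: "gL (Imp a1 a2) = Conj B1 B2" unfolding gL_def B1_def B2_def using G by simp
    have sm1: "small \<Gamma>0 (add_mset a1 \<Delta>)" using wfGD unfolding small_def unfolding G by auto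
    have sm2: "small (add_mset a2 \<Gamma>0) \<Delta>" using wfGD unfolding small_def unfolding G by auto
    have d1: "derivable L \<Pi> (add_mset B1 \<Lambda>)" unfolding B1_def
      by (rule fU(5)[OF sm1 impL.prems(3)]) (use impL.hyps(1) impL.prems(2) G1 in simp)
    have d2: "derivable L \<Pi> (add_mset B2 \<Lambda>)" unfolding B2_def
      by (rule fU(5)[OF sm2 impL.prems(3)]) (use impL.hyps(2) impL.prems(2) G1 in simp)
    have "derivable L \<Pi> (add_mset (Conj B1 B2) \<Lambda>)" by (rule derivable.conjR[OF d1 d2])
    then show ?thesis using inS[OF gL_in] v G by fastforce
  qed
next
  case (negR a1 G1 D1)
  from split_add[OF negR.prems(2)] show ?case
  proof (elim disjE exE conjE)
    fix \<Delta>0 assume De: "\<Delta> = add_mset (Neg a1) \<Delta>0" and D1: "D1 = \<Delta>0 + \<Lambda>"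
    define B where "B = f (add_mset a1 \<Gamma>) \<Delta>0"
    have v: "gR (Neg a1) = B" unfolding gR_def B_def using De by simp
    have sm: "small (add_mset a1 \<Gamma>) \<Delta>0" using wfGD unfolding small_def unfolding De by auto
    have d: "derivable L \<Pi> (add_mset B \<Lambda>)" unfolding B_def
      by (rule fU(5)[OF sm negR.prems(3)]) (use negR.hyps(1) negR.prems(1) D1 in simp)
    then show ?thesis using inS[OF gR_in] v De by fastforce
  next
    fix \<Lambda>0 assume La: "\<Lambda> = add_mset (Neg a1) \<Lambda>0" and D1: "D1 = \<Delta> + \<Lambda>0"
    have d: "derivable L (add_mset a1 \<Pi>) (add_mset A \<Lambda>0)"
      by (rule negR.IH) (use negR.prems D1 La in auto)
    show ?thesis using derivable.negR[OF d] La by (simp add: add_mset_commute)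
  qed
next
  case (negL G1 a1 D1)
  from split_add[OF negL.prems(1)] show ?case
  proof (elim disjE exE conjE)
    fix \<Pi>0 assume P: "\<Pi> = add_mset (Neg a1) \<Pi>0" and G1: "G1 = \<Pi>0 + \<Gamma>"
    have d: "derivable L \<Pi>0 (add_mset A (add_mset a1 \<Lambda>))"
      by (rule negL.IH) (use negL.prems G1 P in auto)
    have d': "derivable L \<Pi>0 (add_mset a1 (add_mset A \<Lambda>))" using d by (simp add: add_mset_commute)
    show ?thesis unfolding P by (rule derivable.negL[OF d'])
  next
    fix \<Gamma>0 assume G: "\<Gamma> = add_mset (Neg a1) \<Gamma>0" and G1: "G1 = \<Pi> + \<Gamma>0"
    define B where "B = f \<Gamma>0 (add_mset a1 \<Delta>)"
    have v: "gL (Neg a1) = B" unfolding gL_def B_def using G by simp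
    have sm: "small \<Gamma>0 (add_mset a1 \<Delta>)" using wfGD unfolding small_def unfolding G by auto
    have d: "derivable L \<Pi> (add_mset B \<Lambda>)" unfolding B_def
      by (rule fU(5)[OF sm negL.prems(3)]) (use negL.hyps(1) negL.prems(2) G1 in simp)
    then show ?thesis using inS[OF gL_in] v G by fastforce
  qed
next
  case (DK xs \<beta> G \<Sigma> \<Omega>)
  have c: "\<forall>x\<in>#\<Pi>+\<Lambda>. condf p a x" by (rule DK.prems(3))
  have e1: "\<Sigma> + image_mset Dp (mset xs) = \<Pi> + \<Gamma>" using DK.prems(1) by simp
  obtain \<Sigma>1 \<Sigma>2 B1 B2 where sp: "\<Sigma> = \<Sigma>1 + \<Sigma>2" "image_mset Dp (mset xs) = B1 + B2"
      "\<Pi> = \<Sigma>1 + B1" "\<Gamma> = \<Sigma>2 + B2"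
    using split_plus[OF e1] by blast
  obtain M1 M2 where mm: "mset xs = M1 + M2" "B1 = image_mset Dp M1" "B2 = image_mset Dp M2"
    using image_mset_eq_plusD[OF sp(2)] by blast
  have PiE: "\<Pi> = \<Sigma>1 + image_mset Dp M1" using sp mm by simp
  have GaE: "\<Gamma> = \<Sigma>2 + image_mset Dp M2" using sp mm by simp
  have dM: "derivable L (image_mset snd M1 + image_mset snd M2) {#\<beta>#}"
    using DK.hyps(1) mm(1) by (simp add: mset_map)
  have sxs: "set xs = set_mset (M1 + M2)" using mm(1) by (metis set_mset_mset)
  have subM: "\<forall>u\<in>#M1 + M2. fst u \<subseteq> G"
  proof
    fix u assume "u \<in># M1 + M2"
    then have "u \<in> set xs" using sxs by simp
    moreover obtain Gi \<alpha> where u: "u = (Gi, \<alpha>)" by fastforce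
    ultimately have "case (Gi, \<alpha>) of (Gi, _) \<Rightarrow> Gi \<subseteq> G" using DK.hyps(2) by blast
    then show "fst u \<subseteq> G" using u by simp
  qed
  have subM1: "\<And>Gi \<alpha>. (Gi, \<alpha>) \<in># M1 \<Longrightarrow> Gi \<subseteq> G" using subM by force
  have subM2: "\<And>Gi \<alpha>. (Gi, \<alpha>) \<in># M2 \<Longrightarrow> Gi \<subseteq> G" using subM by force
  have sig1: "\<forall>x\<in>#\<Sigma>1. sigmaK_ok G x" and sig2: "\<forall>x\<in>#\<Sigma>2. sigmaK_ok G x"
    using DK.hyps(3) sp(1) by auto
  have cM1: "\<forall>u\<in>#M1. condf p a (Dp u)" using c PiE by auto
  have wM2: "\<forall>u\<in>#M2. wf (Dp u)" using wfGD GaE by auto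
  have cM1': "\<forall>u\<in>#M1. fst u \<noteq> {} \<and> a \<notin> fst u \<and> condf p a (snd u)"
    using cM1 by (auto split: prod.splits)
  from split_add[OF DK.prems(2)] show ?case
  proof (elim disjE exE conjE)
    fix \<Delta>0 assume De: "\<Delta> = add_mset (D G \<beta>) \<Delta>0" and Om: "\<Omega> = \<Delta>0 + \<Lambda>"
    show ?thesis
    proof (cases "G - {a} = {}")
      case True
      have M1e: "M1 = {#}"
      proof (rule ccontr)
        assume "M1 \<noteq> {#}"
        then obtain u where u: "u \<in># M1" by (meson multiset_nonemptyE)
        then have "fst u \<subseteq> G" using subM by auto
        then show False using True cM1' u by blast
      qed
      have "derivable L \<Gamma> \<Delta>"
      proof (rule DK'[where M=M2 and \<Sigma>=\<Sigma>2 and \<Omega>=\<Delta>0 and G=G and \<beta>=\<beta>])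
        show "derivable L (image_mset snd M2) {#\<beta>#}" using dM M1e by simp
        show "\<forall>(Gi, _)\<in>#M2. Gi \<subseteq> G" using subM2 by blast
        show "\<forall>x\<in>#\<Sigma>2. sigmaK_ok G x" by (rule sig2)
        show "\<forall>x\<in>#\<Delta>0. omega_ok x" using DK.hyps(4) Om by auto
        show "\<Gamma> = \<Sigma>2 + image_mset Dp M2" by (rule GaE)
        show "\<Delta> = add_mset (D G \<beta>) \<Delta>0" by (rule De)
      qed
      then show ?thesis by (rule top_case)
    next
      case False
      define y where "y = D G \<beta>"
      define N where "N = image_mset Dp M2"
      define B where "B = f (image_mset snd M2) {#\<beta>#}"
      have unN: "image_mset unbox N = image_mset snd M2" unfolding N_def by (rule unbox_Dp)
      have NG: "N \<subseteq># \<Gamma>" unfolding N_def GaE by simp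
      have GN: "\<Gamma> - N = \<Sigma>2" unfolding N_def GaE by simp
      have yD: "y \<in># \<Delta>" unfolding y_def De by simp
      have DY: "\<Delta> - {#y#} = \<Delta>0" unfolding y_def De by simp
      have cB: "condB y N" unfolding condB_def
      proof (intro conjI)
        show "y \<in># \<Delta>" by (rule yD)
        show "boxed y" unfolding y_def by simp
        show "boxgrp y - {a} \<noteq> {}" unfolding y_def using False by simp
        show "N \<subseteq># \<Gamma>" by (rule NG)
        show "\<forall>x\<in>#N. boxed x \<and> boxgrp x \<subseteq> boxgrp y" unfolding N_def y_def using subM2 by fastforce
        show "\<forall>x\<in>#\<Gamma> - N. sigmaK_ok (boxgrp y) x" unfolding GN y_def using sig2 by simp
        show "\<forall>x\<in>#\<Delta> - {#y#}. omega_ok x" unfolding DY using DK.hyps(4) Om by auto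
      qed
      have gBv: "gB (y, N) = D (G - {a}) B" unfolding gB_def B_def using cB unN by (simp add: y_def)
      have sm: "small (image_mset snd M2) {#\<beta>#}" using smB[OF cB] unN by (simp add: y_def)
      note F = fU[OF sm, folded B_def]
      have d1: "derivable L (image_mset snd M1) {#B#}"
      proof -
        have "\<forall>x\<in>#image_mset snd M1 + {#}. condf p a x" using cM1' by auto
        moreover have "derivable L (image_mset snd M1 + image_mset snd M2) ({#\<beta>#} + {#})" using dM by simp
        ultimately show ?thesis using F(5) by fastforce
      qed
      have d2: "derivable L \<Pi> (add_mset (D (G - {a}) B) \<Lambda>)"
      proof (rule DK'[where M=M1 and \<Sigma>=\<Sigma>1 and \<Omega>=\<Lambda> and G="G - {a}" and \<beta>=B])
        show "derivable L (image_mset snd M1) {#B#}" by (rule d1)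
        show "\<forall>(Gi, _)\<in>#M1. Gi \<subseteq> G - {a}" using subM1 cM1' by fastforce
        show "\<forall>x\<in>#\<Sigma>1. sigmaK_ok (G - {a}) x" using sig1 sigmaK_mono by blast
        show "\<forall>x\<in>#\<Lambda>. omega_ok x" using DK.hyps(4) Om by auto
        show "\<Pi> = \<Sigma>1 + image_mset Dp M1" by (rule PiE)
      qed simp
      show ?thesis by (rule inS[OF gB_in[OF yD NG]]) (use d2 gBv in simp)
    qed
  next
    fix \<Lambda>0 assume La: "\<Lambda> = add_mset (D G \<beta>) \<Lambda>0" and Om: "\<Omega> = \<Delta> + \<Lambda>0"
    have aG: "a \<notin> G" and cb: "condf p a \<beta>" using c La by auto
    show ?thesis
    proof (cases "M2 = {#}")
      case True
      have "derivable L \<Pi> (add_mset (D G \<beta>) \<Lambda>0)"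
      proof (rule DK'[where M=M1 and \<Sigma>=\<Sigma>1 and \<Omega>=\<Lambda>0 and G=G and \<beta>=\<beta>])
        show "derivable L (image_mset snd M1) {#\<beta>#}" using dM True by simp
        show "\<forall>(Gi, _)\<in>#M1. Gi \<subseteq> G" using subM1 by blast
        show "\<forall>x\<in>#\<Sigma>1. sigmaK_ok G x" by (rule sig1)
        show "\<forall>x\<in>#\<Lambda>0. omega_ok x" using DK.hyps(4) Om by auto
        show "\<Pi> = \<Sigma>1 + image_mset Dp M1" by (rule PiE)
      qed simp
      then show ?thesis using wR La by metis
    next
      case False
      define H where "H = G \<inter> agtsM \<Gamma>"
      define N where "N = image_mset Dp M2"
      define B where "B = f (image_mset snd M2) {#}"
      have unN: "image_mset unbox N = image_mset snd M2" unfolding N_def by (rule unbox_Dp)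
      have NG: "N \<subseteq># \<Gamma>" unfolding N_def GaE by simp
      have GN: "\<Gamma> - N = \<Sigma>2" unfolding N_def GaE by simp
      have agN: "agtsM N \<subseteq> agtsM \<Gamma>" by (rule agtsM_mono[OF NG])
      have bxN: "\<forall>x\<in>#N. boxed x \<and> boxgrp x \<subseteq> H"
      proof
        fix x assume x: "x \<in># N"
        then obtain u where u: "u \<in># M2" "x = Dp u" unfolding N_def by auto
        have "agts x \<subseteq> agtsM N" using x unfolding agtsM_def by auto
        then show "boxed x \<and> boxgrp x \<subseteq> H" using u subM2 agN unfolding H_def
          by (auto split: prod.splits)
      qed
      obtain u where u: "u \<in># M2" using False by (meson multiset_nonemptyE)
      have "Dp u \<in># N" unfolding N_def using u by simp
      then have "boxgrp (Dp u) \<subseteq> H" using bxN by blast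
      moreover have "boxgrp (Dp u) \<noteq> {}" using wM2 u by (auto split: prod.splits)
      ultimately have Hne: "H \<noteq> {}" by blast
      have cA: "condA H N" unfolding condA_def
      proof (intro conjI)
        show "H \<noteq> {}" by (rule Hne)
        show "a \<notin> H" unfolding H_def using aG by simp
        show "H \<subseteq> agtsM \<Gamma>" unfolding H_def by simp
        show "N \<noteq> {#}" unfolding N_def using False by simp
        show "N \<subseteq># \<Gamma>" by (rule NG)
        show "\<forall>x\<in>#N. boxed x \<and> boxgrp x \<subseteq> H" by (rule bxN)
        show "\<forall>x\<in>#\<Gamma> - N. sigmaK_ok H x" unfolding GN using sig2 sigmaK_mono[of G _ H] unfolding H_def by blast
        show "\<forall>x\<in>#\<Delta>. omega_ok x" using DK.hyps(4) Om by auto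
      qed
      have gAv: "gA (H, N) = Neg (D H (Neg B))" unfolding gA_def B_def using cA unN by simp
      have sm: "small (image_mset snd M2) {#}" using smA[OF cA] unN by simp
      note F = fU[OF sm, folded B_def]
      have d1: "derivable L (image_mset snd M1) (add_mset B {#\<beta>#})"
      proof -
        have "\<forall>x\<in>#image_mset snd M1 + {#\<beta>#}. condf p a x" using cM1' cb by auto
        moreover have "derivable L (image_mset snd M1 + image_mset snd M2) ({#} + {#\<beta>#})" using dM by simp
        ultimately show ?thesis using F(5) by fastforce
      qed
      have d2: "derivable L (add_mset (Neg B) (image_mset snd M1)) {#\<beta>#}"
        by (rule derivable.negL[OF d1])
      have d3: "derivable L (add_mset (D H (Neg B)) \<Pi>) (add_mset (D G \<beta>) \<Lambda>0)"
      proof (rule DK'[where M="add_mset (H, Neg B) M1" and \<Sigma>=\<Sigma>1 and \<Omega>=\<Lambda>0 and G=G and \<beta>=\<beta>])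
        show "derivable L (image_mset snd (add_mset (H, Neg B) M1)) {#\<beta>#}" using d2 by simp
        show "\<forall>(Gi, _)\<in>#add_mset (H, Neg B) M1. Gi \<subseteq> G" using subM1 unfolding H_def by fastforce
        show "\<forall>x\<in>#\<Sigma>1. sigmaK_ok G x" by (rule sig1)
        show "\<forall>x\<in>#\<Lambda>0. omega_ok x" using DK.hyps(4) Om by auto
        show "add_mset (D H (Neg B)) \<Pi> = \<Sigma>1 + image_mset Dp (add_mset (H, Neg B) M1)" using PiE by simp
      qed simp
      have d4: "derivable L \<Pi> (add_mset (Neg (D H (Neg B))) \<Lambda>)"
        unfolding La by (rule derivable.negR[OF d3])
      show ?thesis by (rule inS[OF gA_in[OF NG, of H]]) (use d4 gAv in simp)
    qed
  qed
next
  case (DD \<Gamma>' \<Sigma> b \<Omega>)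
  have c: "\<forall>x\<in>#\<Pi>+\<Lambda>. condf p a x" by (rule DD.prems(3))
  obtain \<Sigma>1 \<Sigma>2 B1 B2 where sp: "\<Sigma> = \<Sigma>1 + \<Sigma>2" "image_mset (D {b}) \<Gamma>' = B1 + B2"
      "\<Pi> = \<Sigma>1 + B1" "\<Gamma> = \<Sigma>2 + B2"
    using split_plus[OF DD.prems(1)] by blast
  obtain G1 G2 where mm: "\<Gamma>' = G1 + G2" "B1 = image_mset (D {b}) G1" "B2 = image_mset (D {b}) G2"
    using image_mset_eq_plusD[OF sp(2)] by blast
  have PiE: "\<Pi> = \<Sigma>1 + image_mset (D {b}) G1" using sp mm by simp
  have GaE: "\<Gamma> = \<Sigma>2 + image_mset (D {b}) G2" using sp mm by simp
  have sig1: "\<forall>x\<in>#\<Sigma>1. sigmaD_ok b x" and sig2: "\<forall>x\<in>#\<Sigma>2. sigmaD_ok b x"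
    using DD.hyps(4) sp(1) by auto
  have om: "\<forall>x\<in>#\<Delta>. omega_ok x" "\<forall>x\<in>#\<Lambda>. omega_ok x" using DD.hyps(5) DD.prems(2) by auto
  show ?case
  proof (cases "G2 = {#}")
    case True
    have "derivable L \<Pi> \<Lambda>"
      by (rule DD'[where \<Gamma>'=G1 and \<Sigma>=\<Sigma>1 and b=b]) (use DD.hyps(1-3) mm(1) True sig1 om PiE in auto)
    then show ?thesis by (rule wR)
  next
    case G2ne: False
    show ?thesis
    proof (cases "G1 = {#}")
      case True
      have "derivable L \<Gamma> \<Delta>"
        by (rule DD'[where \<Gamma>'=G2 and \<Sigma>=\<Sigma>2 and b=b]) (use DD.hyps(1-3) mm(1) True sig2 om GaE in auto)
      then show ?thesis by (rule top_case)
    next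
      case False
      obtain g where g: "g \<in># G1" using False by (meson multiset_nonemptyE)
      have cG1D: "\<And>x. x \<in># G1 \<Longrightarrow> condf p a (D {b} x)"
      proof -
        fix x assume "x \<in># G1"
        then have "D {b} x \<in># \<Pi>" using PiE by simp
        then show "condf p a (D {b} x)" using c by (meson union_iff)
      qed
      have cG1: "\<forall>x\<in>#G1. condf p a x" using cG1D by simp
      have ab: "a \<noteq> b" using cG1D[OF g] by simp
      obtain g2 where g2: "g2 \<in># G2" using G2ne by (meson multiset_nonemptyE)
      define H where "H = {b}"
      define N where "N = image_mset (D {b}) G2"
      define B where "B = f G2 {#}"
      have unN: "image_mset unbox N = G2" unfolding N_def by (simp add: multiset.map_comp o_def)
      have NG: "N \<subseteq># \<Gamma>" unfolding N_def GaE by simp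
      have GN: "\<Gamma> - N = \<Sigma>2" unfolding N_def GaE by simp
      have wS2: "\<forall>x\<in>#\<Sigma>2. wf x" using wfGD GaE by auto
      have cA: "condA H N" unfolding condA_def
      proof (intro conjI)
        show "H \<noteq> {}" unfolding H_def by simp
        show "a \<notin> H" unfolding H_def using ab by simp
        show "H \<subseteq> agtsM \<Gamma>" unfolding H_def GaE using g2 by (auto simp: agtsM_def)
        show "N \<noteq> {#}" unfolding N_def using G2ne by simp
        show "N \<subseteq># \<Gamma>" by (rule NG)
        show "\<forall>x\<in>#N. boxed x \<and> boxgrp x \<subseteq> H" unfolding N_def H_def by auto
        show "\<forall>x\<in>#\<Gamma> - N. sigmaK_ok H x" unfolding GN H_def
        proof
          fix x assume x: "x \<in># \<Sigma>2"
          show "sigmaK_ok {b} x" by (rule sigmaD_K) (use sig2 wS2 x in auto)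
        qed
        show "\<forall>x\<in>#\<Delta>. omega_ok x" by (rule om(1))
      qed
      have gAv: "gA (H, N) = Neg (D {b} (Neg B))" unfolding gA_def B_def using cA unN by (simp add: H_def)
      have sm: "small G2 {#}" using smA[OF cA] unN by simp
      note F = fU[OF sm, folded B_def]
      have d1: "derivable L G1 {#B#}"
      proof -
        have "\<forall>x\<in>#G1 + {#}. condf p a x" using cG1 by auto
        moreover have "derivable L (G1 + G2) ({#} + {#})" using DD.hyps(2) mm(1) by simp
        ultimately show ?thesis using F(5) by fastforce
      qed
      have d2: "derivable L (add_mset (Neg B) G1) {#}" by (rule derivable.negL[OF d1])
      have d3: "derivable L (add_mset (D {b} (Neg B)) \<Pi>) \<Lambda>"
        by (rule DD'[where \<Gamma>'="add_mset (Neg B) G1" and \<Sigma>=\<Sigma>1 and b=b]) (use DD.hyps(1) d2 sig1 om PiE in auto)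
      have d4: "derivable L \<Pi> (add_mset (Neg (D {b} (Neg B))) \<Lambda>)" by (rule derivable.negR[OF d3])
      show ?thesis by (rule inS[OF gA_in[OF NG, of H]]) (use d4 gAv in simp)
    qed
  qed
qed

end

context step begin
lemma A_UI: "UI L p a \<Gamma> \<Delta> A"
  unfolding UI_def
proof (intro conjI allI impI)
  show "wf A" by (rule A_good(1))
  show "vars A \<subseteq> varsM (\<Gamma> + \<Delta>) - {p}" by (rule A_good(2))
  show "agts A \<subseteq> agtsM (\<Gamma> + \<Delta>) - {a}" by (rule A_good(3))
  show "derivable L (add_mset A \<Gamma>) \<Delta>" by (rule A_good(4))
  fix \<Pi> \<Lambda> assume c1: "\<forall>x \<in># \<Pi> + \<Lambda>. wf x" and c2: "p \<notin> varsM (\<Pi> + \<Lambda>)"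
    and c3: "a \<notin> agtsM (\<Pi> + \<Lambda>)" and d: "derivable L (\<Pi> + \<Gamma>) (\<Delta> + \<Lambda>)"
  have c: "\<forall>x\<in>#\<Pi>+\<Lambda>. condf p a x" using c1 c2 c3 cond_iff[of "\<Pi>+\<Lambda>" p a] by blast
  show "derivable L \<Pi> (add_mset A \<Lambda>)" by (rule inner[OF d refl refl c])
qed
end

lemma main_aux:
  fixes L :: logic and p :: 'p and a :: "'a::finite"
  shows "\<forall>\<Gamma> \<Delta>. msize (\<Gamma>+\<Delta>) = n \<longrightarrow> (\<forall>x\<in>#\<Gamma>+\<Delta>. wf x) \<longrightarrow> (\<exists>A. UI L p a \<Gamma> \<Delta> (A :: ('p,'a) fm))"
proof (induction n rule: less_induct)
  case (less n)
  show ?case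
  proof (intro allI impI)
    fix \<Gamma> \<Delta> :: "('p,'a) fm multiset"
    assume n: "msize (\<Gamma>+\<Delta>) = n" and w: "\<forall>x\<in>#\<Gamma>+\<Delta>. wf x"
    define f where "f = (\<lambda>\<Gamma>' \<Delta>'. SOME A. UI L p a \<Gamma>' \<Delta>' A)"
    have fP: "UI L p a \<Gamma>' \<Delta>' (f \<Gamma>' \<Delta>')"
      if "msize (\<Gamma>'+\<Delta>') < msize (\<Gamma>+\<Delta>)" "\<forall>x\<in>#\<Gamma>'+\<Delta>'. wf x" for \<Gamma>' \<Delta>'
    proof -
      have "\<exists>A. UI L p a \<Gamma>' \<Delta>' A" using less.IH[of "msize (\<Gamma>'+\<Delta>')"] that n by blast
      then show ?thesis unfolding f_def by (rule someI_ex)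
    qed
    interpret S: step L p a \<Gamma> \<Delta> f
    proof (unfold_locales)
      show "\<forall>x\<in>#\<Gamma>+\<Delta>. wf x" by (rule w)
    next
      fix \<Gamma>' \<Delta>' :: "('p,'a) fm multiset"
      assume "msize (\<Gamma>'+\<Delta>') < msize (\<Gamma>+\<Delta>)" "\<forall>x\<in>#\<Gamma>'+\<Delta>'. wf x"
      then show "UI L p a \<Gamma>' \<Delta>' (f \<Gamma>' \<Delta>')" by (rule fP)
    qed
    show "\<exists>A. UI L p a \<Gamma> \<Delta> A" using S.A_UI by (rule exI)
  qed
qed

theorem theorem5p5:
  fixes L :: logic
    and \<Gamma> \<Delta> :: "('p::countable, 'a::finite) fm multiset"
    and p :: 'p and a :: 'a
  assumes "\<forall>x \<in># \<Gamma> + \<Delta>. wf x"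
  shows "\<exists>A. wf A
    \<and> vars A \<subseteq> varsM (\<Gamma> + \<Delta>) - {p}
    \<and> agts A \<subseteq> agtsM (\<Gamma> + \<Delta>) - {a}
    \<and> derivable L (add_mset A \<Gamma>) \<Delta>
    \<and> (\<forall>\<Pi> \<Lambda>. (\<forall>x \<in># \<Pi> + \<Lambda>. wf x)
          \<longrightarrow> p \<notin> varsM (\<Pi> + \<Lambda>) \<longrightarrow> a \<notin> agtsM (\<Pi> + \<Lambda>)
          \<longrightarrow> derivable L (\<Pi> + \<Gamma>) (\<Delta> + \<Lambda>)
          \<longrightarrow> derivable L \<Pi> (add_mset A \<Lambda>))"
proof -
  have h: "\<forall>\<Gamma>' \<Delta>'. msize (\<Gamma>'+\<Delta>') = msize (\<Gamma>+\<Delta>) \<longrightarrow> (\<forall>x\<in>#\<Gamma>'+\<Delta>'. wf x) \<longrightarrow> (\<exists>A. UI L p a \<Gamma>' \<Delta>' A)"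
    by (rule main_aux)
  have "\<exists>A. UI L p a \<Gamma> \<Delta> A" by (rule mp[OF mp[OF spec[OF spec[OF h, of \<Gamma>], of \<Delta>] refl] assms])
  then show ?thesis unfolding UI_def .
qed

end
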